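(* Let $C_0\ge1$. There is a constant $M$ depending only on $C_0$ such that the following holds. Let $k,k'$ be positive integers and $w>0$ with $$0<k'-k\le C_0w^{-1},\qquad w^{-1}\le C_0k .$$ Let $f=\cos(kx)e^{-kt}$, $g=\cos(k'y)e^{-k't}$ (both harmonic in $\mathbb{T}^2\times\mathbb{R}$), put $\alpha(t)=\theta(t/w)$ and $$u=\begin{cases}f+(1-\alpha(t))g,& t\le w,\\ \alpha(t-w)f+g,& t\ge w.\end{cases}$$ Then: (a) there is a $C^1$ real $2\times2$ matrix-valued function $A(x,y,t)$ on $\mathbb{T}^2\times\mathbb{R}$, equal to the identity for $t\le0$ and $t\ge 2w$, such that $\ddot u+\operatorname{div}(A\nabla u)=0$ on $\mathbb{T}^2\times\mathbb{R}$; (b) on $\mathbb{T}^2\times\mathbb{R}$, $\|A-\mathrm{Id}\|\le \frac{M}{wk}$, $\|\nabla A\|\le\frac{M}{w}$ and $\|\dot A\|\le\frac Mw$; (c) for every multi-index $\beta\in\mathbb{N}^3$ (derivatives in $x,y,t$) with $|\beta|\le2$ and every $(x,y,t)\in\mathbb{T}^2\times[0,2w]$, $$|\partial^\beta u(x,y,t)|\le M(k')^{|\beta|}\sup_{\mathbb{T}^2\times[0,2w]}|u|.$$ In particular $u=f$ for $t\le0$ and $u=g$ for $t\ge2w$.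
   Context: $\mathbb{T}^2=(\mathbb{R}/2\pi\mathbb{Z})^2$ with coordinates $(x,y)$, $t$ the third coordinate. For a real $2\times2$ matrix function $A(x,y,t)$, $\ddot u+\operatorname{div}(A\nabla u)$ means $\partial_t^2u+\sum_{i,j\in\{x,y\}}\partial_i(A_{ij}\partial_ju)$; $\nabla A$ denotes the spatial $(x,y)$-derivatives of the entries of $A$ and $\dot A=\partial_tA$. The function $\theta:\mathbb{R}\to[0,1]$ is defined by $\theta(t)=1$ for $t\le0$, $\theta(t)=0$ for $t\ge1$, and $\theta(t)=1-G(\tan(\pi(t-1/2)))$ for $t\in(0,1)$, where $G(s)=\pi^{-1/2}\int_{-\infty}^se^{-\eta^2}\,d\eta$; it is $C^\infty$, monotonically decreasing on $(0,1)$. *)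

theory Defs
  imports "HOL-Analysis.Analysis"
begin

definition Gerf :: "real \<Rightarrow> real" where
  "Gerf s = (LBINT \<eta>:{..s}. exp (- (\<eta>^2))) / sqrt pi"

definition theta :: "real \<Rightarrow> real" where
  "theta t = (if t \<le> 0 then 1 else if 1 \<le> t then 0
              else 1 - Gerf (tan (pi * (t - 1/2))))"

text \<open>Partial derivatives of a function of (x,y,t): index 0 = x, 1 = y, 2 = t.\<close>
definition pd :: "nat \<Rightarrow> (real \<Rightarrow> real \<Rightarrow> real \<Rightarrow> 'a::real_normed_vector)
                   \<Rightarrow> real \<Rightarrow> real \<Rightarrow> real \<Rightarrow> 'a" where
  "pd i F x y t =
     (if i = 0 then vector_derivative (\<lambda>s. F s y t) (at x)
      else if i = 1 then vector_derivative (\<lambda>s. F x s t) (at y)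
      else vector_derivative (\<lambda>s. F x y s) (at t))"

text \<open>Iterated partial derivative for a multi-index given as a list of directions.\<close>
definition pderivs :: "nat list \<Rightarrow> (real \<Rightarrow> real \<Rightarrow> real \<Rightarrow> 'a::real_normed_vector)
                   \<Rightarrow> real \<Rightarrow> real \<Rightarrow> real \<Rightarrow> 'a" where
  "pderivs is F = foldr pd is F"

definition ffun :: "nat \<Rightarrow> real \<Rightarrow> real \<Rightarrow> real \<Rightarrow> real" where
  "ffun k x y t = cos (real k * x) * exp (- real k * t)"

definition gfun :: "nat \<Rightarrow> real \<Rightarrow> real \<Rightarrow> real \<Rightarrow> real" where
  "gfun k' x y t = cos (real k' * y) * exp (- real k' * t)"

definition ufun :: "nat \<Rightarrow> nat \<Rightarrow> real \<Rightarrow> real \<Rightarrow> real \<Rightarrow> real \<Rightarrow> real" where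
  "ufun k k' w x y t =
     (if t \<le> w then ffun k x y t + (1 - theta (t / w)) * gfun k' x y t
      else theta ((t - w) / w) * ffun k x y t + gfun k' x y t)"

definition C1_fun3 :: "(real \<Rightarrow> real \<Rightarrow> real \<Rightarrow> 'a::real_normed_vector) \<Rightarrow> bool" where
  "C1_fun3 F \<longleftrightarrow> (\<exists>D :: real \<times> real \<times> real \<Rightarrow> (real \<times> real \<times> real) \<Rightarrow>\<^sub>L 'a.
      (\<forall>p. ((\<lambda>(x, y, t). F x y t) has_derivative blinfun_apply (D p)) (at p))
      \<and> continuous_on UNIV D)"

definition periodic_xy :: "(real \<Rightarrow> real \<Rightarrow> real \<Rightarrow> 'a) \<Rightarrow> bool" where
  "periodic_xy F \<longleftrightarrow> (\<forall>x y t. F (x + 2*pi) y t = F x y t \<and> F x (y + 2*pi) t = F x y t)"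

end

theory Submission
  imports Defs "HOL-Probability.Distributions" "HOL-Real_Asymp.Real_Asymp"
begin


abbreviation gs :: "real \<Rightarrow> real" where "gs x \<equiv> exp (- (x\<^sup>2))"

lemma gauss_half_neg:
  "has_bochner_integral lborel (\<lambda>x. indicator {..0} x *\<^sub>R gs x) (sqrt pi / 2)"
proof -
  have "has_bochner_integral lborel (\<lambda>x. indicator {0..} (0 + (-1) * x) *\<^sub>R gs (0 + (-1) * x)) ((sqrt pi / 2) /\<^sub>R \<bar>-1\<bar>)"
    using gaussian_moment_0 lborel_has_bochner_integral_real_affine_iff[where c="-1::real" and t=0 and f="\<lambda>x. indicator {0..} x *\<^sub>R gs x" and x="sqrt pi / 2"] by simp
  moreover have "(\<lambda>x. indicator {0..} (0 + (-1) * x) *\<^sub>R gs (0 + (-1) * x)) = (\<lambda>x. indicator {..0} x *\<^sub>R gs x)"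
    by (auto simp: indicator_def fun_eq_iff)
  ultimately show ?thesis by simp
qed

lemma gauss_full: "has_bochner_integral lborel gs (sqrt pi)"
proof -
  have "has_bochner_integral lborel (\<lambda>x. indicator {0..} x *\<^sub>R gs x + indicator {..0} x *\<^sub>R gs x) (sqrt pi / 2 + sqrt pi / 2)"
    using gaussian_moment_0 gauss_half_neg by (rule has_bochner_integral_add)
  moreover have "AE x in lborel. indicator {0..} x *\<^sub>R gs x + indicator {..0} x *\<^sub>R gs x = gs x"
    using AE_lborel_singleton[of 0] by eventually_elim (auto simp: indicator_def)
  ultimately show ?thesis
    by (subst (asm) has_bochner_integral_cong_AE) auto
qed

lemma gauss_integrable: "integrable lborel gs"
  using gauss_full by (simp add: has_bochner_integral_iff)

lemma gauss_integral: "integral\<^sup>L lborel gs = sqrt pi"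
  using gauss_full by (simp add: has_bochner_integral_iff)

definition Ig :: "real \<Rightarrow> real" where "Ig s = (\<integral>x. indicator {..s} x *\<^sub>R gs x \<partial>lborel)"

lemma Gerf_Ig: "Gerf s = Ig s / sqrt pi"
  by (simp add: Gerf_def Ig_def set_lebesgue_integral_def)

lemma Ig_top: "(Ig \<longlongrightarrow> sqrt pi) at_top"
  unfolding Ig_def using tendsto_integral_at_top[OF _ gauss_integrable] gauss_integral by simp

lemma Ig_bot: "(Ig \<longlongrightarrow> 0) at_bot"
  unfolding Ig_def
proof (rule tendsto_at_botI_sequentially)
  fix X :: "nat \<Rightarrow> real" assume X: "filterlim X at_bot sequentially"
  have lim: "AE x in lborel. (\<lambda>n. indicator {..X n} x *\<^sub>R gs x) \<longlonglongrightarrow> (0::real)"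
  proof
    fix x
    from X have "eventually (\<lambda>n. X n \<le> x - 1) sequentially"
      by (simp add: filterlim_at_bot)
    then have "eventually (\<lambda>n. X n < x) sequentially"
      by (rule eventually_mono) simp
    then show "(\<lambda>n. indicator {..X n} x *\<^sub>R gs x) \<longlonglongrightarrow> (0::real)"
      by (intro tendsto_eventually) (auto split: split_indicator elim!: eventually_mono)
  qed
  have bnd: "AE x in lborel. norm (indicator {..X n} x *\<^sub>R gs x) \<le> norm (gs x)" for n
    by (auto split: split_indicator)
  have "(\<lambda>n. \<integral>x. indicator {..X n} x *\<^sub>R gs x \<partial>lborel) \<longlonglongrightarrow> (\<integral>x. (0::real) \<partial>lborel)"
    using integral_dominated_convergence[OF _ _ integrable_norm[OF gauss_integrable] lim bnd] by simp
  then show "(\<lambda>n. \<integral>x. indicator {..X n} x *\<^sub>R gs x \<partial>lborel) \<longlonglongrightarrow> 0" by simp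
qed

lemma Ig_split: "Ig s = Ig 0 + (LBINT x=ereal 0..ereal s. gs x)"
proof (cases "0 \<le> s")
  case True
  have "(\<lambda>x. indicator {..s} x *\<^sub>R gs x) = (\<lambda>x. indicator {..0} x *\<^sub>R gs x + indicator {0<..s} x *\<^sub>R gs x)"
    using True by (auto simp: fun_eq_iff indicator_def)
  then have "Ig s = (\<integral>x. indicator {..0} x *\<^sub>R gs x + indicator {0<..s} x *\<^sub>R gs x \<partial>lborel)"
    unfolding Ig_def by (rule arg_cong)
  also have "\<dots> = Ig 0 + (\<integral>x. indicator {0<..s} x *\<^sub>R gs x \<partial>lborel)"
    unfolding Ig_def
    by (rule Bochner_Integration.integral_add; rule integrable_mult_indicator[OF _ gauss_integrable]; simp)
  also have "(\<integral>x. indicator {0<..s} x *\<^sub>R gs x \<partial>lborel) = (LBINT x=ereal 0..ereal s. gs x)"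
    using True by (simp add: interval_integral_Ioc set_lebesgue_integral_def)
  finally show ?thesis .
next
  case False
  have "(\<lambda>x. indicator {..0} x *\<^sub>R gs x) = (\<lambda>x. indicator {..s} x *\<^sub>R gs x + indicator {s<..0} x *\<^sub>R gs x)"
    using False by (auto simp: fun_eq_iff indicator_def)
  then have "Ig 0 = (\<integral>x. indicator {..s} x *\<^sub>R gs x + indicator {s<..0} x *\<^sub>R gs x \<partial>lborel)"
    unfolding Ig_def by (rule arg_cong)
  also have "\<dots> = Ig s + (\<integral>x. indicator {s<..0} x *\<^sub>R gs x \<partial>lborel)"
    unfolding Ig_def
    by (rule Bochner_Integration.integral_add; rule integrable_mult_indicator[OF _ gauss_integrable]; simp)
  also have "(\<integral>x. indicator {s<..0} x *\<^sub>R gs x \<partial>lborel) = (LBINT x=ereal s..ereal 0. gs x)"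
    using False by (simp add: interval_integral_Ioc set_lebesgue_integral_def)
  also have "\<dots> = - (LBINT x=ereal 0..ereal s. gs x)"
    by (rule interval_integral_endpoints_reverse)
  finally show ?thesis by simp
qed

lemma Ig_deriv: "(Ig has_real_derivative gs s) (at s)"
proof -
  let ?a = "min s 0 - 1" and ?b = "max s 0 + 1"
  have "((\<lambda>u. LBINT y=ereal 0..ereal u. gs y) has_vector_derivative gs s) (at s within {?a..?b})"
    by (rule interval_integral_FTC2) (auto intro!: continuous_intros)
  moreover have "at s within {?a..?b} = at s"
    by (rule at_within_interior) auto
  ultimately have "((\<lambda>u. LBINT y=ereal 0..ereal u. gs y) has_real_derivative gs s) (at s)"
    by (simp add: has_real_derivative_iff_has_vector_derivative)
  then have "((\<lambda>u. Ig 0 + (LBINT y=ereal 0..ereal u. gs y)) has_real_derivative gs s) (at s)"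
    by (auto intro!: derivative_eq_intros)
  then show ?thesis
    by (rule has_field_derivative_transform_within_open[where S=UNIV]) (auto simp: Ig_split[symmetric])
qed




lemma Gerf_deriv: "(Gerf has_real_derivative gs s / sqrt pi) (at s)"
proof -
  have "((\<lambda>s. Ig s / sqrt pi) has_real_derivative gs s / sqrt pi) (at s)" using Ig_deriv by (rule DERIV_cdivide)
  then show ?thesis unfolding Gerf_Ig[abs_def] .
qed

lemma piece_deriv:
  fixes F F' :: "real \<Rightarrow> real"
  assumes le0: "\<And>t. t \<le> 0 \<Longrightarrow> F t = F 0" and ge1: "\<And>t. 1 \<le> t \<Longrightarrow> F t = F 1"
    and inner: "\<And>t. 0 < t \<Longrightarrow> t < 1 \<Longrightarrow> (F has_real_derivative F' t) (at t)"
    and out: "\<And>t. t \<le> 0 \<or> 1 \<le> t \<Longrightarrow> F' t = 0"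
    and c0: "(F \<longlongrightarrow> F 0) (at_right 0)" and c1: "(F \<longlongrightarrow> F 1) (at_left 1)"
    and d0: "(F' \<longlongrightarrow> 0) (at_right 0)" and d1: "(F' \<longlongrightarrow> 0) (at_left 1)"
  shows "(F has_real_derivative F' t) (at t)"
proof -
  consider "t < 0" | "t = 0" | "0 < t \<and> t < 1" | "t = 1" | "1 < t" by linarith
  then show ?thesis
  proof cases
    case 1
    have "((\<lambda>_. F 0) has_real_derivative 0) (at t)" by simp
    then have "(F has_real_derivative 0) (at t)"
      by (rule has_field_derivative_transform_within_open[where S="{..<0}"]) (use 1 in \<open>auto intro: le0[symmetric]\<close>)
    then show ?thesis using 1 out by simp
  next
    case 5
    have "((\<lambda>_. F 1) has_real_derivative 0) (at t)" by simp
    then have "(F has_real_derivative 0) (at t)"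
      by (rule has_field_derivative_transform_within_open[where S="{1<..}"]) (use 5 in \<open>auto intro: ge1[symmetric]\<close>)
    then show ?thesis using 5 out by simp
  next
    case 3 then show ?thesis using inner by auto
  next
    case 2
    have R: "((\<lambda>y. (F y - F 0)/(y - 0)) \<longlongrightarrow> 0) (at_right 0)"
    proof (rule lhopital_right[where f' = F' and g' = "\<lambda>_. 1"])
      show "((\<lambda>y. F y - F 0) \<longlongrightarrow> 0) (at_right 0)"
        using tendsto_diff[OF c0 tendsto_const[of "F 0"]] by simp
      show "((\<lambda>y. y - 0) \<longlongrightarrow> 0) (at_right (0::real))"
        by (simp add: tendsto_ident_at)
      show "\<forall>\<^sub>F x in at_right 0. x - 0 \<noteq> (0::real)"
        using eventually_at_right_less[of 0] by (rule eventually_mono) simp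
      show "\<forall>\<^sub>F x in at_right 0. (1::real) \<noteq> 0" by simp
      show "\<forall>\<^sub>F x in at_right 0. ((\<lambda>y. F y - F 0) has_real_derivative F' x) (at x)"
        using eventually_at_right_real[of 0 1] by (rule eventually_mono) (auto intro!: derivative_eq_intros inner)
      show "\<forall>\<^sub>F x in at_right 0. ((\<lambda>y. y - 0) has_real_derivative 1) (at x)"
        by (intro always_eventually allI) (auto intro!: derivative_eq_intros)
      show "((\<lambda>x. F' x / 1) \<longlongrightarrow> 0) (at_right 0)" using d0 by simp
    qed
    have L: "((\<lambda>y. (F y - F 0)/(y - 0)) \<longlongrightarrow> 0) (at_left 0)"
    proof (rule tendsto_eventually)
      show "\<forall>\<^sub>F y in at_left 0. (F y - F 0) / (y - 0) = 0"
      proof (rule eventually_mono[OF eventually_at_left_real[of "-1" 0]])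
        fix y :: real assume "y \<in> {-1<..<0}"
        then have "F y = F 0" by (intro le0) auto
        then show "(F y - F 0) / (y - 0) = 0" by simp
      qed simp
    qed
    have "((\<lambda>y. (F y - F 0)/(y - 0)) \<longlongrightarrow> 0) (at 0)" by (rule filterlim_split_at[OF L R])
    then have "(F has_real_derivative 0) (at 0)" unfolding has_field_derivative_iff .
    then show ?thesis using 2 out by simp
  next
    case 4
    have L: "((\<lambda>y. (F y - F 1)/(y - 1)) \<longlongrightarrow> 0) (at_left 1)"
    proof (rule lhopital_left[where f' = F' and g' = "\<lambda>_. 1"])
      show "((\<lambda>y. F y - F 1) \<longlongrightarrow> 0) (at_left 1)"
        using tendsto_diff[OF c1 tendsto_const[of "F 1"]] by simp
      show "((\<lambda>y. y - 1) \<longlongrightarrow> 0) (at_left (1::real))"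
        by (auto intro!: tendsto_eq_intros simp: tendsto_ident_at)
      show "\<forall>\<^sub>F x in at_left 1. x - 1 \<noteq> (0::real)"
        using eventually_at_left_real[of 0 1] by (rule eventually_mono) auto
      show "\<forall>\<^sub>F x in at_left 1. (1::real) \<noteq> 0" by simp
      show "\<forall>\<^sub>F x in at_left 1. ((\<lambda>y. F y - F 1) has_real_derivative F' x) (at x)"
        using eventually_at_left_real[of 0 1] by (rule eventually_mono) (auto intro!: derivative_eq_intros inner)
      show "\<forall>\<^sub>F x in at_left 1. ((\<lambda>y. y - 1) has_real_derivative 1) (at x)"
        by (intro always_eventually allI) (auto intro!: derivative_eq_intros)
      show "((\<lambda>x. F' x / 1) \<longlongrightarrow> 0) (at_left 1)" using d1 by simp
    qed
    have R: "((\<lambda>y. (F y - F 1)/(y - 1)) \<longlongrightarrow> 0) (at_right 1)"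
    proof (rule tendsto_eventually)
      show "\<forall>\<^sub>F y in at_right 1. (F y - F 1) / (y - 1) = 0"
      proof (rule eventually_mono[OF eventually_at_right_less[of "1::real"]])
        fix y :: real assume "1 < y"
        then have "F y = F 1" by (intro ge1) auto
        then show "(F y - F 1) / (y - 1) = 0" by simp
      qed
    qed
    have "((\<lambda>y. (F y - F 1)/(y - 1)) \<longlongrightarrow> 0) (at 1)" by (rule filterlim_split_at[OF L R])
    then have "(F has_real_derivative 0) (at 1)" unfolding has_field_derivative_iff .
    then show ?thesis using 4 out by simp
  qed
qed

definition Tt :: "real \<Rightarrow> real" where "Tt t = tan (pi * (t - 1/2))"
definition h1 :: "real \<Rightarrow> real" where "h1 s = - sqrt pi * (1 + s^2) * exp (- (s^2))"
definition h2 :: "real \<Rightarrow> real" where "h2 s = 2 * pi * sqrt pi * s^3 * (1 + s^2) * exp (- (s^2))"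
definition h3 :: "real \<Rightarrow> real" where
  "h3 s = 2 * pi^2 * sqrt pi * (1 + s^2) * (3 * s^2 + 3 * s^4 - 2 * s^6) * exp (- (s^2))"
definition th1 :: "real \<Rightarrow> real" where "th1 t = (if 0 < t \<and> t < 1 then h1 (Tt t) else 0)"
definition th2 :: "real \<Rightarrow> real" where "th2 t = (if 0 < t \<and> t < 1 then h2 (Tt t) else 0)"
definition th3 :: "real \<Rightarrow> real" where "th3 t = (if 0 < t \<and> t < 1 then h3 (Tt t) else 0)"

lemma Tt_deriv:
  assumes "0 < t" "t < 1"
  shows "(Tt has_real_derivative pi * (1 + (Tt t)^2)) (at t)"
proof -
  have c: "0 < cos (pi * (t - 1/2))"
    using assms by (intro cos_gt_zero_pi) (auto simp: algebra_simps)
  have tanD: "(tan has_real_derivative inverse ((cos (pi * (t - 1/2)))\<^sup>2)) (at (pi * (t - 1/2)))"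
    using c by (intro DERIV_tan) simp
  have D: "((\<lambda>t. tan (pi * (t - 1/2))) has_real_derivative inverse ((cos (pi * (t - 1/2)))\<^sup>2) * pi) (at t)"
    by (rule DERIV_chain2[of tan "inverse ((cos (pi * (t - 1/2)))\<^sup>2)" "\<lambda>t. pi * (t - 1/2)" t pi UNIV, OF tanD])
       (auto intro!: derivative_eq_intros)
  have E: "inverse ((cos (pi * (t - 1/2)))\<^sup>2) * pi = pi * (1 + (Tt t)^2)"
    unfolding Tt_def using tan_sec[of "pi * (t - 1/2)"] c by (simp add: power_inverse mult.commute)
  have T: "Tt = (\<lambda>t. tan (pi * (t - 1/2)))" by (simp add: fun_eq_iff Tt_def)
  show ?thesis using D unfolding E T .
qed

lemma h1_deriv: "(h1 has_real_derivative 2 * sqrt pi * s^3 * exp (- (s^2))) (at s)"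
  unfolding h1_def[abs_def]
  by (auto intro!: derivative_eq_intros simp: algebra_simps power2_eq_square power3_eq_cube)

lemma h2_deriv: "(h2 has_real_derivative 2 * pi * sqrt pi * (3 * s^2 + 3 * s^4 - 2 * s^6) * exp (- (s^2))) (at s)"
  unfolding h2_def[abs_def]
  by (auto intro!: derivative_eq_intros simp: algebra_simps power2_eq_square power3_eq_cube
      eval_nat_numeral)

lemma sqrt_pi_sq: "sqrt pi * sqrt pi = pi" by simp

lemma theta_inner: "0 < t \<Longrightarrow> t < 1 \<Longrightarrow> theta t = 1 - Gerf (Tt t)"
  by (simp add: theta_def Tt_def)

lemma theta_deriv_inner:
  assumes "0 < t" "t < 1"
  shows "(theta has_real_derivative th1 t) (at t)"
proof -
  have "((\<lambda>t. 1 - Gerf (Tt t)) has_real_derivative - (gs (Tt t) / sqrt pi * (pi * (1 + (Tt t)^2)))) (at t)"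
    by (auto intro!: derivative_eq_intros DERIV_chain2[OF Gerf_deriv] Tt_deriv assms)
  moreover have "- (gs (Tt t) / sqrt pi * (pi * (1 + (Tt t)^2))) = th1 t"
  proof -
    have "pi / sqrt pi = sqrt pi" by (metis sqrt_pi_sq nonzero_mult_div_cancel_left pi_gt_zero real_sqrt_gt_0_iff less_irrefl)
    have "- (gs (Tt t) / sqrt pi * (pi * (1 + (Tt t)^2))) = - (gs (Tt t) * (1 + (Tt t)^2) * (pi / sqrt pi))"
      by (simp add: field_simps)
    also have "\<dots> = h1 (Tt t)" unfolding h1_def \<open>pi / sqrt pi = sqrt pi\<close> by (simp add: mult_ac)
    finally show ?thesis using assms unfolding th1_def by simp
  qed
  ultimately have "((\<lambda>t. 1 - Gerf (Tt t)) has_real_derivative th1 t) (at t)" by simp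
  then show ?thesis
    by (rule has_field_derivative_transform_within_open[where S="{0<..<1}"]) (use assms in \<open>auto simp: theta_inner\<close>)
qed

lemma th1_deriv_inner:
  assumes "0 < t" "t < 1"
  shows "(th1 has_real_derivative th2 t) (at t)"
proof -
  have "((\<lambda>t. h1 (Tt t)) has_real_derivative (2 * sqrt pi * (Tt t)^3 * exp (- ((Tt t)^2))) * (pi * (1 + (Tt t)^2))) (at t)"
    by (rule DERIV_chain2[OF h1_deriv Tt_deriv[OF assms]])
  moreover have "(2 * sqrt pi * (Tt t)^3 * exp (- ((Tt t)^2))) * (pi * (1 + (Tt t)^2)) = th2 t"
    using assms unfolding th2_def h2_def by (simp add: mult_ac)
  ultimately have "((\<lambda>t. h1 (Tt t)) has_real_derivative th2 t) (at t)" by simp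
  then show ?thesis
    by (rule has_field_derivative_transform_within_open[where S="{0<..<1}"]) (use assms in \<open>auto simp: th1_def\<close>)
qed

lemma th2_deriv_inner:
  assumes "0 < t" "t < 1"
  shows "(th2 has_real_derivative th3 t) (at t)"
proof -
  have "((\<lambda>t. h2 (Tt t)) has_real_derivative (2 * pi * sqrt pi * (3 * (Tt t)^2 + 3 * (Tt t)^4 - 2 * (Tt t)^6) * exp (- ((Tt t)^2))) * (pi * (1 + (Tt t)^2))) (at t)"
    by (rule DERIV_chain2[OF h2_deriv Tt_deriv[OF assms]])
  moreover have "(2 * pi * sqrt pi * (3 * (Tt t)^2 + 3 * (Tt t)^4 - 2 * (Tt t)^6) * exp (- ((Tt t)^2))) * (pi * (1 + (Tt t)^2)) = th3 t"
    using assms unfolding th3_def h3_def by (simp add: mult_ac power2_eq_square) (simp add: algebra_simps)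
  ultimately have "((\<lambda>t. h2 (Tt t)) has_real_derivative th3 t) (at t)" by simp
  then show ?thesis
    by (rule has_field_derivative_transform_within_open[where S="{0<..<1}"]) (use assms in \<open>auto simp: th2_def\<close>)
qed

lemma ev_r: "eventually (\<lambda>t. 0 < t \<and> t < (1::real)) (at_right 0)"
  using eventually_at_right_real[of 0 1] by (rule eventually_mono) auto
lemma ev_l: "eventually (\<lambda>t. 0 < t \<and> t < (1::real)) (at_left 1)"
  using eventually_at_left_real[of 0 1] by (rule eventually_mono) auto

lemma th1_lim: "(th1 \<longlongrightarrow> 0) (at_right 0)" "(th1 \<longlongrightarrow> 0) (at_left 1)"
proof -
  have "((\<lambda>t. h1 (Tt t)) \<longlongrightarrow> 0) (at_right 0)" unfolding h1_def Tt_def by real_asymp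
  then show "(th1 \<longlongrightarrow> 0) (at_right 0)"
    by (rule tendsto_cong[THEN iffD1, rotated]) (rule eventually_mono[OF ev_r], simp add: th1_def)
  have "((\<lambda>t. h1 (Tt t)) \<longlongrightarrow> 0) (at_left 1)" unfolding h1_def Tt_def by real_asymp
  then show "(th1 \<longlongrightarrow> 0) (at_left 1)"
    by (rule tendsto_cong[THEN iffD1, rotated]) (rule eventually_mono[OF ev_l], simp add: th1_def)
qed

lemma th2_lim: "(th2 \<longlongrightarrow> 0) (at_right 0)" "(th2 \<longlongrightarrow> 0) (at_left 1)"
proof -
  have "((\<lambda>t. h2 (Tt t)) \<longlongrightarrow> 0) (at_right 0)" unfolding h2_def Tt_def by real_asymp
  then show "(th2 \<longlongrightarrow> 0) (at_right 0)"
    by (rule tendsto_cong[THEN iffD1, rotated]) (rule eventually_mono[OF ev_r], simp add: th2_def)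
  have "((\<lambda>t. h2 (Tt t)) \<longlongrightarrow> 0) (at_left 1)" unfolding h2_def Tt_def by real_asymp
  then show "(th2 \<longlongrightarrow> 0) (at_left 1)"
    by (rule tendsto_cong[THEN iffD1, rotated]) (rule eventually_mono[OF ev_l], simp add: th2_def)
qed

lemma th3_lim: "(th3 \<longlongrightarrow> 0) (at_right 0)" "(th3 \<longlongrightarrow> 0) (at_left 1)"
proof -
  have "((\<lambda>t. h3 (Tt t)) \<longlongrightarrow> 0) (at_right 0)" unfolding h3_def Tt_def by real_asymp
  then show "(th3 \<longlongrightarrow> 0) (at_right 0)"
    by (rule tendsto_cong[THEN iffD1, rotated]) (rule eventually_mono[OF ev_r], simp add: th3_def)
  have "((\<lambda>t. h3 (Tt t)) \<longlongrightarrow> 0) (at_left 1)" unfolding h3_def Tt_def by real_asymp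
  then show "(th3 \<longlongrightarrow> 0) (at_left 1)"
    by (rule tendsto_cong[THEN iffD1, rotated]) (rule eventually_mono[OF ev_l], simp add: th3_def)
qed

lemma theta_lim: "(theta \<longlongrightarrow> 1) (at_right 0)" "(theta \<longlongrightarrow> 0) (at_left 1)"
proof -
  have Gb: "(Gerf \<longlongrightarrow> 0) at_bot" unfolding Gerf_Ig[abs_def]
    using tendsto_divide[OF Ig_bot tendsto_const[of "sqrt pi"]] by simp
  have Gt: "(Gerf \<longlongrightarrow> 1) at_top" unfolding Gerf_Ig[abs_def]
    using tendsto_divide[OF Ig_top tendsto_const[of "sqrt pi"]] by simp
  have Tb: "filterlim Tt at_bot (at_right 0)" unfolding Tt_def by real_asymp
  have Tp: "filterlim Tt at_top (at_left 1)" unfolding Tt_def by real_asymp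
  have "((\<lambda>t. 1 - Gerf (Tt t)) \<longlongrightarrow> 1 - 0) (at_right 0)"
    by (intro tendsto_diff tendsto_const filterlim_compose[OF Gb Tb])
  then have "((\<lambda>t. 1 - Gerf (Tt t)) \<longlongrightarrow> 1) (at_right 0)" by simp
  then show "(theta \<longlongrightarrow> 1) (at_right 0)"
    by (rule tendsto_cong[THEN iffD1, rotated]) (rule eventually_mono[OF ev_r], simp add: theta_inner)
  have "((\<lambda>t. 1 - Gerf (Tt t)) \<longlongrightarrow> 1 - 1) (at_left 1)"
    by (intro tendsto_diff tendsto_const filterlim_compose[OF Gt Tp])
  then have "((\<lambda>t. 1 - Gerf (Tt t)) \<longlongrightarrow> 0) (at_left 1)" by simp
  then show "(theta \<longlongrightarrow> 0) (at_left 1)"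
    by (rule tendsto_cong[THEN iffD1, rotated]) (rule eventually_mono[OF ev_l], simp add: theta_inner)
qed

lemma theta_le0': "t \<le> 0 \<Longrightarrow> theta t = theta 0" by (simp add: theta_def)
lemma theta_ge1': "1 \<le> t \<Longrightarrow> theta t = theta 1" by (simp add: theta_def)
lemma theta_01: "theta 0 = 1" "theta 1 = 0" by (simp_all add: theta_def)
lemma th_out: "t \<le> 0 \<or> 1 \<le> t \<Longrightarrow> th1 t = 0" "t \<le> 0 \<or> 1 \<le> t \<Longrightarrow> th2 t = 0"
  "t \<le> 0 \<or> 1 \<le> t \<Longrightarrow> th3 t = 0"
  by (auto simp: th1_def th2_def th3_def)
lemma th_le0': "t \<le> 0 \<Longrightarrow> th1 t = th1 0" "t \<le> 0 \<Longrightarrow> th2 t = th2 0"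
  by (auto simp: th1_def th2_def)
lemma th_ge1': "1 \<le> t \<Longrightarrow> th1 t = th1 1" "1 \<le> t \<Longrightarrow> th2 t = th2 1"
  by (auto simp: th1_def th2_def)
lemma th_01: "th1 0 = 0" "th1 1 = 0" "th2 0 = 0" "th2 1 = 0" "th3 0 = 0" "th3 1 = 0"
  by (auto simp: th1_def th2_def th3_def)

lemma theta_deriv: "(theta has_real_derivative th1 t) (at t)"
  by (rule piece_deriv[OF theta_le0' theta_ge1' theta_deriv_inner th_out(1)])
     (simp_all add: theta_01 theta_lim th1_lim)

lemma th1_deriv: "(th1 has_real_derivative th2 t) (at t)"
  by (rule piece_deriv[OF th_le0'(1) th_ge1'(1) th1_deriv_inner th_out(2)])
     (simp_all add: th_01 th1_lim th2_lim)

lemma th2_deriv: "(th2 has_real_derivative th3 t) (at t)"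
  by (rule piece_deriv[OF th_le0'(2) th_ge1'(2) th2_deriv_inner th_out(3)])
     (simp_all add: th_01 th2_lim th3_lim)

lemma isCont_transform_open:
  assumes "isCont f t" "open S" "t \<in> S" "\<And>x. x \<in> S \<Longrightarrow> f x = g x"
  shows "isCont g t"
proof -
  have "eventually (\<lambda>x. f x = g x) (nhds t)"
    using eventually_nhds_in_open[OF assms(2,3)] by (rule eventually_mono) (rule assms(4))
  then show ?thesis using assms(1) isCont_cong by blast
qed

lemma th3_cont: "isCont th3 t"
proof -
  consider "t < 0" | "t = 0" | "0 < t \<and> t < 1" | "t = 1" | "1 < t" by linarith
  then show ?thesis
  proof cases
    case 1
    have "isCont (\<lambda>_. 0::real) t" by simp
    then show ?thesis
      by (rule isCont_transform_open[where S="{..<0}"]) (use 1 in \<open>auto simp: th3_def\<close>)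
  next
    case 5
    have "isCont (\<lambda>_. 0::real) t" by simp
    then show ?thesis
      by (rule isCont_transform_open[where S="{1<..}"]) (use 5 in \<open>auto simp: th3_def\<close>)
  next
    case 3
    have "isCont Tt t" using Tt_deriv 3 by (auto intro: DERIV_isCont)
    then have "isCont (\<lambda>t. h3 (Tt t)) t" unfolding h3_def by (auto intro!: continuous_intros)
    then show ?thesis
      by (rule isCont_transform_open[where S="{0<..<1}"]) (use 3 in \<open>auto simp: th3_def\<close>)
  next
    case 2
    have L: "(th3 \<longlongrightarrow> 0) (at_left 0)"
      by (rule tendsto_eventually, rule eventually_mono[OF eventually_at_left_real[of "-1" 0]]) (auto simp: th3_def)
    have "(th3 \<longlongrightarrow> 0) (at 0)" by (rule filterlim_split_at[OF L th3_lim(1)])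
    then show ?thesis using 2 by (simp add: isCont_def th_01)
  next
    case 4
    have R: "(th3 \<longlongrightarrow> 0) (at_right 1)"
      by (rule tendsto_eventually, rule eventually_mono[OF eventually_at_right_less[of "1::real"]]) (auto simp: th3_def)
    have "(th3 \<longlongrightarrow> 0) (at 1)" by (rule filterlim_split_at[OF th3_lim(2) R])
    then show ?thesis using 4 by (simp add: isCont_def th_01)
  qed
qed

lemma bound_of_cont:
  fixes f :: "real \<Rightarrow> real"
  assumes "\<And>t. isCont f t" "\<And>t. t \<notin> {0..1} \<Longrightarrow> \<bar>f t\<bar> \<le> 1"
  shows "\<exists>B. \<forall>t. \<bar>f t\<bar> \<le> B"
proof -
  have "compact (f ` {0..1})"
    by (rule compact_continuous_image) (use assms(1) in \<open>auto intro: continuous_at_imp_continuous_on\<close>)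
  then obtain B where B: "\<And>t. t \<in> {0..1} \<Longrightarrow> \<bar>f t\<bar> \<le> B"
    by (metis bounded_iff compact_imp_bounded image_eqI real_norm_def)
  show ?thesis
    by (rule exI[of _ "max B 1"]) (metis B assms(2) max.coboundedI1 max.coboundedI2)
qed

lemma theta_bounds: "\<exists>B\<ge>1. \<forall>t. \<bar>theta t\<bar> \<le> B \<and> \<bar>th1 t\<bar> \<le> B \<and> \<bar>th2 t\<bar> \<le> B \<and> \<bar>th3 t\<bar> \<le> B"
proof -
  have o: "t \<notin> {0..1} \<Longrightarrow> \<bar>theta t\<bar> \<le> 1 \<and> \<bar>th1 t\<bar> \<le> 1 \<and> \<bar>th2 t\<bar> \<le> 1 \<and> \<bar>th3 t\<bar> \<le> 1" for t
    by (auto simp: theta_def th1_def th2_def th3_def)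
  obtain B0 where B0: "\<And>t. \<bar>theta t\<bar> \<le> B0"
    using bound_of_cont[of theta, OF theta_deriv[THEN DERIV_isCont]] o by blast
  obtain B1 where B1: "\<And>t. \<bar>th1 t\<bar> \<le> B1"
    using bound_of_cont[of th1, OF th1_deriv[THEN DERIV_isCont]] o by blast
  obtain B2 where B2: "\<And>t. \<bar>th2 t\<bar> \<le> B2"
    using bound_of_cont[of th2, OF th2_deriv[THEN DERIV_isCont]] o by blast
  obtain B3 where B3: "\<And>t. \<bar>th3 t\<bar> \<le> B3"
    using bound_of_cont[of th3, OF th3_cont] o by blast
  define Bm where "Bm = max 1 (max B0 (max B1 (max B2 B3)))"
  have "1 \<le> Bm" "B0 \<le> Bm" "B1 \<le> Bm" "B2 \<le> Bm" "B3 \<le> Bm" unfolding Bm_def by auto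
  then show ?thesis using B0 B1 B2 B3 by (meson order.trans)
qed




lemma pd0_vec: "((\<lambda>s. F s y t) has_vector_derivative D) (at x) \<Longrightarrow> pd 0 F x y t = D"
  by (simp add: pd_def vector_derivative_at)
lemma pd1_vec: assumes "((\<lambda>s. F x s t) has_vector_derivative D) (at y)" shows "pd 1 F x y t = D"
  using vector_derivative_at[OF assms] unfolding pd_def by simp
lemma pd2_vec: assumes "((\<lambda>s. F x y s) has_vector_derivative D) (at t)" shows "pd 2 F x y t = D"
  using vector_derivative_at[OF assms] unfolding pd_def by simp
lemma pd0_real: "((\<lambda>s. F s y t) has_real_derivative D) (at x) \<Longrightarrow> pd 0 F x y t = D"
  by (intro pd0_vec) (simp add: has_real_derivative_iff_has_vector_derivative[symmetric])
lemma pd1_real: "((\<lambda>s. F x s t) has_real_derivative D) (at y) \<Longrightarrow> pd 1 F x y t = D"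
  by (intro pd1_vec) (simp add: has_real_derivative_iff_has_vector_derivative[symmetric])
lemma pd2_real: "((\<lambda>s. F x y s) has_real_derivative D) (at t) \<Longrightarrow> pd 2 F x y t = D"
  by (intro pd2_vec) (simp add: has_real_derivative_iff_has_vector_derivative[symmetric])

definition trig :: "real \<Rightarrow> real \<Rightarrow> real \<Rightarrow> real \<Rightarrow> real" where
  "trig c \<kappa> \<phi> x = c * cos (\<kappa> * x + \<phi>)"
definition Rf :: "(real \<Rightarrow> real) \<Rightarrow> real \<Rightarrow> real \<Rightarrow> real" where
  "Rf \<alpha> \<kappa> t = \<alpha> t * exp (- \<kappa> * t)"
definition sep2 where
  "sep2 P1 Q1 R1 P2 Q2 R2 = (\<lambda>x y t. P1 x * Q1 y * R1 t + P2 x * Q2 y * R2 (t::real) :: real)"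

lemma trig_deriv: "(trig c \<kappa> \<phi> has_real_derivative trig (c*\<kappa>) \<kappa> (\<phi> + pi/2) x) (at x)"
  unfolding trig_def
  by (auto intro!: derivative_eq_intros simp: cos_add sin_add algebra_simps)

lemma Rf_deriv: assumes "(\<alpha> has_real_derivative \<alpha>' t) (at t)"
  shows "(Rf \<alpha> \<kappa> has_real_derivative Rf (\<lambda>t. \<alpha>' t - \<kappa> * \<alpha> t) \<kappa> t) (at t)"
  unfolding Rf_def using assms
  by (auto intro!: derivative_eq_intros simp: algebra_simps)

lemma pd0_sep2: "pd 0 (sep2 (trig c1 k1 p1) Q1 R1 (trig c2 k2 p2) Q2 R2)
   = sep2 (trig (c1*k1) k1 (p1 + pi/2)) Q1 R1 (trig (c2*k2) k2 (p2 + pi/2)) Q2 R2"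
  apply (rule ext)+
  apply (rule pd0_real)
  unfolding sep2_def
  by (auto intro!: derivative_eq_intros trig_deriv[THEN DERIV_chain2, of "\<lambda>x. x"])

lemma pd1_sep2: "pd 1 (sep2 P1 (trig c1 k1 p1) R1 P2 (trig c2 k2 p2) R2)
   = sep2 P1 (trig (c1*k1) k1 (p1 + pi/2)) R1 P2 (trig (c2*k2) k2 (p2 + pi/2)) R2"
  apply (rule ext)+
  apply (rule pd1_real)
  unfolding sep2_def
  by (auto intro!: derivative_eq_intros trig_deriv[THEN DERIV_chain2, of "\<lambda>x. x"])

lemma pd2_sep2:
  assumes "\<And>t. (\<alpha> has_real_derivative \<alpha>' t) (at t)" "\<And>t. (\<beta> has_real_derivative \<beta>' t) (at t)"
  shows "pd 2 (sep2 P1 Q1 (Rf \<alpha> k1) P2 Q2 (Rf \<beta> k2))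
   = sep2 P1 Q1 (Rf (\<lambda>t. \<alpha>' t - k1 * \<alpha> t) k1) P2 Q2 (Rf (\<lambda>t. \<beta>' t - k2 * \<beta> t) k2)"
  apply (rule ext)+
  apply (rule pd2_real)
  unfolding sep2_def
  by (auto intro!: derivative_eq_intros Rf_deriv[THEN DERIV_chain2, of _ _ "\<lambda>x. x"] assms)

lemma sep2_bound:
  assumes "0 \<le> t" "0 \<le> k1" "0 \<le> k2"
  shows "\<bar>sep2 (trig c1 a1 p1) (trig d1 b1 q1) (Rf \<alpha> k1) (trig c2 a2 p2) (trig d2 b2 q2) (Rf \<beta> k2) x y t\<bar>
     \<le> \<bar>c1\<bar> * \<bar>d1\<bar> * \<bar>\<alpha> t\<bar> + \<bar>c2\<bar> * \<bar>d2\<bar> * \<bar>\<beta> t\<bar>"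
proof -
  have e1: "exp (- k1 * t) \<le> 1" "exp (- k2 * t) \<le> 1" using assms by auto
  have t: "\<bar>trig c \<kappa> \<phi> z\<bar> \<le> \<bar>c\<bar>" for c \<kappa> \<phi> z
    unfolding trig_def abs_mult by (simp add: mult_left_le)
  have r: "\<bar>Rf \<gamma> \<kappa> t\<bar> \<le> \<bar>\<gamma> t\<bar>" if "exp (- \<kappa> * t) \<le> 1" for \<gamma> \<kappa>
    unfolding Rf_def abs_mult using that by (simp add: mult_left_le)
  have "\<bar>sep2 (trig c1 a1 p1) (trig d1 b1 q1) (Rf \<alpha> k1) (trig c2 a2 p2) (trig d2 b2 q2) (Rf \<beta> k2) x y t\<bar>
     \<le> \<bar>trig c1 a1 p1 x\<bar> * \<bar>trig d1 b1 q1 y\<bar> * \<bar>Rf \<alpha> k1 t\<bar> + \<bar>trig c2 a2 p2 x\<bar> * \<bar>trig d2 b2 q2 y\<bar> * \<bar>Rf \<beta> k2 t\<bar>"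
    unfolding sep2_def abs_mult[symmetric] by (rule abs_triangle_ineq)
  also have "\<dots> \<le> \<bar>c1\<bar> * \<bar>d1\<bar> * \<bar>\<alpha> t\<bar> + \<bar>c2\<bar> * \<bar>d2\<bar> * \<bar>\<beta> t\<bar>"
    by (intro add_mono mult_mono t r e1) auto
  finally show ?thesis .
qed

lemma C1I:
  fixes F :: "real \<Rightarrow> real \<Rightarrow> real \<Rightarrow> 'a::real_normed_vector"
  assumes "\<And>p. ((\<lambda>(x, y, t). F x y t) has_derivative
      (\<lambda>h. fst h *\<^sub>R Fx p + fst (snd h) *\<^sub>R Fy p + snd (snd h) *\<^sub>R Ft p)) (at p)"
    and "continuous_on UNIV Fx" "continuous_on UNIV Fy" "continuous_on UNIV Ft"
  shows "C1_fun3 F"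
  unfolding C1_fun3_def
proof (intro exI conjI allI)
  let ?D = "\<lambda>p. (blinfun_scaleR_left (Fx p) o\<^sub>L fst_blinfun) + (blinfun_scaleR_left (Fy p) o\<^sub>L (fst_blinfun o\<^sub>L snd_blinfun))
     + (blinfun_scaleR_left (Ft p) o\<^sub>L (snd_blinfun o\<^sub>L snd_blinfun))"
  fix p
  have "blinfun_apply (?D p) = (\<lambda>h. fst h *\<^sub>R Fx p + fst (snd h) *\<^sub>R Fy p + snd (snd h) *\<^sub>R Ft p)"
    by (auto simp: blinfun.add_left)
  then show "((\<lambda>(x, y, t). F x y t) has_derivative blinfun_apply (?D p)) (at p)"
    using assms(1) by simp
next
  show "continuous_on UNIV (\<lambda>p. (blinfun_scaleR_left (Fx p) o\<^sub>L fst_blinfun) + (blinfun_scaleR_left (Fy p) o\<^sub>L (fst_blinfun o\<^sub>L snd_blinfun))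
     + (blinfun_scaleR_left (Ft p) o\<^sub>L (snd_blinfun o\<^sub>L snd_blinfun)))"
    using assms(2-4) by (intro continuous_intros) auto
qed

definition tripf :: "(real \<Rightarrow> real) \<Rightarrow> (real \<Rightarrow> real) \<Rightarrow> (real \<Rightarrow> real) \<Rightarrow> 'a::real_normed_vector
   \<Rightarrow> real \<times> real \<times> real \<Rightarrow> 'a" where
  "tripf P Q R M p = (P (fst p) * Q (fst (snd p)) * R (snd (snd p))) *\<^sub>R M"

lemma trip_deriv:
  assumes "\<And>x. (P has_real_derivative P' x) (at x)" "\<And>x. (Q has_real_derivative Q' x) (at x)"
    "\<And>x. (R has_real_derivative R' x) (at x)"
  shows "(tripf P Q R M has_derivative
     (\<lambda>h. fst h *\<^sub>R tripf P' Q R M p + fst (snd h) *\<^sub>R tripf P Q' R M p + snd (snd h) *\<^sub>R tripf P Q R' M p)) (at p)"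
proof -
  have dP: "((\<lambda>p. P (fst p)) has_derivative (\<lambda>h. fst h * P' (fst p))) (at p)"
    by (rule DERIV_compose_FDERIV[OF assms(1) has_derivative_fst[OF has_derivative_ident]])
  have dQ: "((\<lambda>p. Q (fst (snd p))) has_derivative (\<lambda>h. fst (snd h) * Q' (fst (snd p)))) (at p)"
    by (rule DERIV_compose_FDERIV[OF assms(2) has_derivative_fst[OF has_derivative_snd[OF has_derivative_ident]]])
  have dR: "((\<lambda>p. R (snd (snd p))) has_derivative (\<lambda>h. snd (snd h) * R' (snd (snd p)))) (at p)"
    by (rule DERIV_compose_FDERIV[OF assms(3) has_derivative_snd[OF has_derivative_snd[OF has_derivative_ident]]])
  show ?thesis
    unfolding tripf_def[abs_def]
    by (rule has_derivative_eq_rhs, rule has_derivative_scaleR[OF has_derivative_mult[OF has_derivative_mult[OF dP dQ] dR] has_derivative_const])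
       (auto simp: fun_eq_iff algebra_simps)
qed

lemma trip_cont:
  assumes "\<And>x. isCont P x" "\<And>x. isCont Q x" "\<And>x. isCont R x"
  shows "continuous_on UNIV (tripf P Q R M)"
  unfolding tripf_def[abs_def]
  by (intro continuous_at_imp_continuous_on ballI continuous_intros isCont_o2[OF _ assms(1)]
       isCont_o2[OF _ assms(2)] isCont_o2[OF _ assms(3)])

lemma trip_norm: "norm (tripf P Q R M p) = \<bar>P (fst p)\<bar> * \<bar>Q (fst (snd p))\<bar> * \<bar>R (snd (snd p))\<bar> * norm M"
  by (simp add: tripf_def abs_mult)

lemma pd_frechet:
  fixes F :: "real \<Rightarrow> real \<Rightarrow> real \<Rightarrow> 'a::real_normed_vector"
  assumes "((\<lambda>p. F (fst p) (fst (snd p)) (snd (snd p))) has_derivative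
      (\<lambda>h. fst h *\<^sub>R Fx + fst (snd h) *\<^sub>R Fy + snd (snd h) *\<^sub>R Ft)) (at (x, y, t))"
  shows "pd 0 F x y t = Fx" "pd 1 F x y t = Fy" "pd 2 F x y t = Ft"
proof -
  have c0: "((\<lambda>s. (s, y, t)) has_derivative (\<lambda>h. (h, 0, 0))) (at x)"
    by (auto intro!: derivative_eq_intros simp: zero_prod_def)
  have c1: "((\<lambda>s. (x, s, t)) has_derivative (\<lambda>h. (0, h, 0))) (at y)"
    by (auto intro!: derivative_eq_intros simp: zero_prod_def)
  have c2: "((\<lambda>s. (x, y, s)) has_derivative (\<lambda>h. (0, 0, h))) (at t)"
    by (auto intro!: derivative_eq_intros simp: zero_prod_def)
  from has_derivative_compose[OF c0 assms] show "pd 0 F x y t = Fx"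
    by (intro pd0_vec) (simp add: has_vector_derivative_def)
  from has_derivative_compose[OF c1 assms] show "pd 1 F x y t = Fy"
    by (intro pd1_vec) (simp add: has_vector_derivative_def)
  from has_derivative_compose[OF c2 assms] show "pd 2 F x y t = Ft"
    by (intro pd2_vec) (simp add: has_vector_derivative_def)
qed




lemma abs_helper: "0 \<le> (E::real) \<Longrightarrow> 0 < d \<Longrightarrow> \<bar>2 * Z * E / d\<bar> = 2 * \<bar>Z\<bar> * E / d"
  by (simp add: abs_mult abs_divide)

lemma arith_c:
  fixes v \<kappa> \<kappa>d \<kappa>2 P X1 X2 E Eb B C0 :: real
  assumes "0 < v" "0 < \<kappa>" "\<kappa> \<le> \<kappa>d" "0 \<le> \<kappa>2" "\<kappa>2 \<le> P * \<kappa>" "\<bar>X1\<bar> \<le> B * v" "\<bar>X2\<bar> \<le> B * v^2"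
    "0 \<le> E" "E \<le> Eb" "v \<le> C0 * \<kappa>" "0 \<le> B"
  shows "\<bar>2 * (X2 - 2 * \<kappa>2 * X1) * E / \<kappa>d\<bar> \<le> 2 * B * Eb * (C0 + 2 * P) * v"
proof -
  have kd: "0 < \<kappa>d" using assms by linarith
  have "\<bar>2 * (X2 - 2 * \<kappa>2 * X1) * E / \<kappa>d\<bar> = 2 * \<bar>X2 - 2 * \<kappa>2 * X1\<bar> * E / \<kappa>d"
    using kd assms by (intro abs_helper) auto
  also have "\<dots> \<le> 2 * (B * v^2 + 2 * \<kappa>2 * (B * v)) * Eb / \<kappa>"
  proof (intro frac_le mult_mono mult_left_mono)
    show "\<bar>X2 - 2 * \<kappa>2 * X1\<bar> \<le> B * v^2 + 2 * \<kappa>2 * (B * v)"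
    proof -
      have "\<bar>X2 - 2 * \<kappa>2 * X1\<bar> \<le> \<bar>X2\<bar> + 2 * \<kappa>2 * \<bar>X1\<bar>"
        using assms by (simp add: abs_mult order.trans[OF abs_triangle_ineq4])
      also have "\<dots> \<le> B * v^2 + 2 * \<kappa>2 * (B * v)"
        using assms by (intro add_mono mult_left_mono) auto
      finally show ?thesis .
    qed
  qed (use assms kd in auto)
  also have "\<dots> = 2 * B * Eb * v * (v + 2 * \<kappa>2) / \<kappa>"
    by (simp add: algebra_simps power2_eq_square)
  also have "\<dots> \<le> 2 * B * Eb * v * (C0 * \<kappa> + 2 * (P * \<kappa>)) / \<kappa>"
    using assms by (intro divide_right_mono mult_left_mono add_mono) auto
  also have "\<dots> = 2 * B * Eb * (C0 + 2 * P) * v"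
    using assms by (simp add: field_simps)
  finally show ?thesis .
qed

lemma arith_dc:
  fixes v \<kappa> \<kappa>d \<kappa>2 P X1 X2 X3 E Eb B C0 \<delta> :: real
  assumes "0 < v" "0 < \<kappa>" "\<kappa> \<le> \<kappa>d" "0 \<le> \<kappa>2" "\<kappa>2 \<le> P * \<kappa>" "\<bar>X1\<bar> \<le> B * v" "\<bar>X2\<bar> \<le> B * v^2"
    "\<bar>X3\<bar> \<le> B * v^3" "\<bar>\<delta>\<bar> \<le> C0 * v"
    "0 \<le> E" "E \<le> Eb" "v \<le> C0 * \<kappa>" "0 \<le> B" "0 \<le> C0"
  shows "\<bar>2 * ((X3 - 2 * \<kappa>2 * X2) + \<delta> * (X2 - 2 * \<kappa>2 * X1)) * E / \<kappa>d\<bar>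
     \<le> 2 * B * Eb * (C0^2 + 2 * P * C0 + C0^3 + 2 * C0^2 * P) * \<kappa> * v"
proof -
  have kd: "0 < \<kappa>d" using assms by linarith
  have X: "\<bar>X2 - 2 * \<kappa>2 * X1\<bar> \<le> B * v^2 + 2 * \<kappa>2 * (B * v)"
  proof -
    have "\<bar>X2 - 2 * \<kappa>2 * X1\<bar> \<le> \<bar>X2\<bar> + 2 * \<kappa>2 * \<bar>X1\<bar>"
      using assms by (simp add: abs_mult order.trans[OF abs_triangle_ineq4])
    also have "\<dots> \<le> B * v^2 + 2 * \<kappa>2 * (B * v)"
      using assms by (intro add_mono mult_left_mono) auto
    finally show ?thesis .
  qed
  have Y: "\<bar>X3 - 2 * \<kappa>2 * X2\<bar> \<le> B * v^3 + 2 * \<kappa>2 * (B * v^2)"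
  proof -
    have "\<bar>X3 - 2 * \<kappa>2 * X2\<bar> \<le> \<bar>X3\<bar> + 2 * \<kappa>2 * \<bar>X2\<bar>"
      using assms by (simp add: abs_mult order.trans[OF abs_triangle_ineq4])
    also have "\<dots> \<le> B * v^3 + 2 * \<kappa>2 * (B * v^2)"
      using assms by (intro add_mono mult_left_mono) auto
    finally show ?thesis .
  qed
  have Z: "\<bar>(X3 - 2 * \<kappa>2 * X2) + \<delta> * (X2 - 2 * \<kappa>2 * X1)\<bar>
      \<le> (B * v^3 + 2 * \<kappa>2 * (B * v^2)) + C0 * v * (B * v^2 + 2 * \<kappa>2 * (B * v))"
  proof -
    have "\<bar>(X3 - 2 * \<kappa>2 * X2) + \<delta> * (X2 - 2 * \<kappa>2 * X1)\<bar>
        \<le> \<bar>X3 - 2 * \<kappa>2 * X2\<bar> + \<bar>\<delta>\<bar> * \<bar>X2 - 2 * \<kappa>2 * X1\<bar>"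
      by (metis abs_mult abs_triangle_ineq)
    also have "\<dots> \<le> (B * v^3 + 2 * \<kappa>2 * (B * v^2)) + C0 * v * (B * v^2 + 2 * \<kappa>2 * (B * v))"
      using assms X Y by (intro add_mono mult_mono) auto
    finally show ?thesis .
  qed
  have "\<bar>2 * ((X3 - 2 * \<kappa>2 * X2) + \<delta> * (X2 - 2 * \<kappa>2 * X1)) * E / \<kappa>d\<bar>
     = 2 * \<bar>(X3 - 2 * \<kappa>2 * X2) + \<delta> * (X2 - 2 * \<kappa>2 * X1)\<bar> * E / \<kappa>d"
    using kd assms by (intro abs_helper) auto
  also have "\<dots> \<le> 2 * ((B * v^3 + 2 * \<kappa>2 * (B * v^2)) + C0 * v * (B * v^2 + 2 * \<kappa>2 * (B * v))) * Eb / \<kappa>"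
    using Z assms kd by (intro frac_le mult_mono mult_left_mono) auto
  also have "\<dots> = 2 * B * Eb * v * (v * v + 2 * \<kappa>2 * v + C0 * v * v + 2 * C0 * \<kappa>2 * v) / \<kappa>"
    by (simp add: algebra_simps power2_eq_square power3_eq_cube)
  also have "\<dots> \<le> 2 * B * Eb * v * ((C0 * \<kappa>) * (C0 * \<kappa>) + 2 * (P * \<kappa>) * (C0 * \<kappa>)
       + C0 * (C0 * \<kappa>) * (C0 * \<kappa>) + 2 * C0 * (P * \<kappa>) * (C0 * \<kappa>)) / \<kappa>"
    using assms by (intro divide_right_mono mult_left_mono add_mono mult_mono) auto
  also have "\<dots> = 2 * B * Eb * (C0^2 + 2 * P * C0 + C0^3 + 2 * C0^2 * P) * \<kappa> * v"
    using assms by (simp add: field_simps power2_eq_square power3_eq_cube)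
  finally show ?thesis .
qed




definition U :: "2 \<Rightarrow> 2 \<Rightarrow> real^2^2" where "U r c = (\<chi> i j. if i = r \<and> j = c then 1 else 0)"

lemma U_norm: "norm (U r c) \<le> 1"
proof -
  have "norm (U r c) \<le> sum (\<lambda>i. norm (U r c $ i)) UNIV"
    unfolding norm_vec_def by (rule L2_set_le_sum) simp
  also have "\<dots> \<le> sum (\<lambda>i. sum (\<lambda>j. \<bar>U r c $ i $ j\<bar>) UNIV) UNIV"
    by (intro sum_mono norm_le_l1_cart)
  also have "\<dots> = 1"
    unfolding sum_2 U_def using exhaust_2[of r] exhaust_2[of c] by auto
  finally show ?thesis .
qed

definition cs :: "real \<Rightarrow> real \<Rightarrow> real" where "cs \<kappa> x = cos (\<kappa> * x)"
definition sn :: "real \<Rightarrow> real \<Rightarrow> real" where "sn \<kappa> x = sin (\<kappa> * x)"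

lemma cs_d: "(cs \<kappa> has_real_derivative - (\<kappa> * sn \<kappa> x)) (at x)"
  unfolding cs_def[abs_def] sn_def by (auto intro!: derivative_eq_intros)
lemma sn_d: "(sn \<kappa> has_real_derivative \<kappa> * cs \<kappa> x) (at x)"
  unfolding sn_def[abs_def] cs_def by (auto intro!: derivative_eq_intros)
lemma cs_cont: "isCont (cs \<kappa>) x" and sn_cont: "isCont (sn \<kappa>) x"
  and dcs_cont: "isCont (\<lambda>x. - (\<kappa> * sn \<kappa> x)) x" and dsn_cont: "isCont (\<lambda>x. \<kappa> * cs \<kappa> x) x"
  unfolding cs_def[abs_def] sn_def[abs_def] by (auto intro!: continuous_intros)
lemma cs_abs: "\<bar>cs \<kappa> x\<bar> \<le> 1" and sn_abs: "\<bar>sn \<kappa> x\<bar> \<le> 1"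
  by (auto simp: cs_def sn_def)


definition Kc :: "real \<Rightarrow> real \<Rightarrow> real" where
  "Kc C0 B = 2 * B * exp (2 * C0) * (C0 + 2 * (1 + C0^2) + C0^2 + 2 * (1 + C0^2) * C0 + C0^3 + 2 * C0^2 * (1 + C0^2))"

lemma trip_bnd:
  assumes "\<bar>P (fst p)\<bar> \<le> p1" "\<bar>Q (fst (snd p))\<bar> \<le> 1" "\<bar>R (snd (snd p))\<bar> \<le> r" "norm M \<le> 1"
  shows "norm (tripf P Q R M p) \<le> p1 * r"
proof -
  have "norm (tripf P Q R M p) = \<bar>P (fst p)\<bar> * \<bar>Q (fst (snd p))\<bar> * \<bar>R (snd (snd p))\<bar> * norm M"
    by (rule trip_norm)
  also have "\<dots> \<le> p1 * 1 * r * 1"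
    using assms by (intro mult_mono) auto
  finally show ?thesis by simp
qed

lemma norm4: "norm (x1 + x2 + x3 + x4 :: 'a::real_normed_vector) \<le> norm x1 + norm x2 + norm x3 + norm x4"
proof -
  have "norm (x1 + x2 + x3 + x4) \<le> norm (x1 + x2 + x3) + norm x4" by (rule norm_triangle_ineq)
  also have "norm (x1 + x2 + x3) \<le> norm (x1 + x2) + norm x3" by (rule norm_triangle_ineq)
  also have "norm (x1 + x2) \<le> norm x1 + norm x2" by (rule norm_triangle_ineq)
  finally show ?thesis by simp
qed

locale LS =
  fixes C0 B w :: real and k k' :: nat
  assumes C0: "1 \<le> C0" and B1: "1 \<le> B"
    and Bth: "\<And>t. \<bar>theta t\<bar> \<le> B \<and> \<bar>th1 t\<bar> \<le> B \<and> \<bar>th2 t\<bar> \<le> B \<and> \<bar>th3 t\<bar> \<le> B"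
    and kpos: "0 < k" and wpos: "0 < w" and kk: "k < k'"
    and dk: "real k' - real k \<le> C0 / w" and wk: "1 / w \<le> C0 * real k"
begin

definition "a t = theta ((t - w) / w)"
definition "a1 t = th1 ((t - w) / w) / w"
definition "a2 t = th2 ((t - w) / w) / w^2"
definition "a3 t = th3 ((t - w) / w) / w^3"
definition "b t = 1 - theta (t / w)"
definition "b1 t = - (th1 (t / w) / w)"
definition "b2 t = - (th2 (t / w) / w^2)"
definition "b3 t = - (th3 (t / w) / w^3)"
definition "c1 t = 2 * (b2 t - 2 * real k' * b1 t) * exp (- (real k' - real k) * t) / real k"
definition "dc1 t = 2 * ((b3 t - 2 * real k' * b2 t) - (real k' - real k) * (b2 t - 2 * real k' * b1 t))
    * exp (- (real k' - real k) * t) / real k"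
definition "c2 t = 2 * (a2 t - 2 * real k * a1 t) * exp ((real k' - real k) * t) / real k'"
definition "dc2 t = 2 * ((a3 t - 2 * real k * a2 t) + (real k' - real k) * (a2 t - 2 * real k * a1 t))
    * exp ((real k' - real k) * t) / real k'"

lemma chain_a:
  assumes "\<And>s. (f has_real_derivative f' s) (at s)"
  shows "((\<lambda>t. f ((t - w) / w) / w^n) has_real_derivative f' ((t - w) / w) / w^(Suc n)) (at t)"
  using wpos by (auto intro!: derivative_eq_intros DERIV_chain2[OF assms] simp: field_simps)

lemma chain_b:
  assumes "\<And>s. (f has_real_derivative f' s) (at s)"
  shows "((\<lambda>t. f (t / w) / w^n) has_real_derivative f' (t / w) / w^(Suc n)) (at t)"
  using wpos by (auto intro!: derivative_eq_intros DERIV_chain2[OF assms] simp: field_simps)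

lemma a_d: "(a has_real_derivative a1 t) (at t)"
  using chain_a[OF theta_deriv, of 0 t] unfolding a_def[abs_def] a1_def by simp
lemma a1_d: "(a1 has_real_derivative a2 t) (at t)"
  using chain_a[OF th1_deriv, of 1 t] unfolding a1_def[abs_def] a2_def by (simp add: power2_eq_square)
lemma a2_d: "(a2 has_real_derivative a3 t) (at t)"
  using chain_a[OF th2_deriv, of 2 t] unfolding a2_def[abs_def] a3_def by (simp add: eval_nat_numeral)
lemma b_d: "(b has_real_derivative b1 t) (at t)"
  using DERIV_diff[OF DERIV_const[of 1] chain_b[OF theta_deriv, of 0 t]] unfolding b_def[abs_def] b1_def
  by simp
lemma b1_d: "(b1 has_real_derivative b2 t) (at t)"
  using DERIV_minus[OF chain_b[OF th1_deriv, of 1 t]] unfolding b1_def[abs_def] b2_def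
  by (simp add: power2_eq_square)
lemma b2_d: "(b2 has_real_derivative b3 t) (at t)"
  using DERIV_minus[OF chain_b[OF th2_deriv, of 2 t]] unfolding b2_def[abs_def] b3_def
  by (simp add: eval_nat_numeral)

lemma theta_le0: "x \<le> 0 \<Longrightarrow> theta x = 1" and theta_ge1: "1 \<le> x \<Longrightarrow> theta x = 0"
  by (auto simp: theta_def)

lemma a_le: "t \<le> w \<Longrightarrow> a t = 1"
  unfolding a_def using wpos by (intro theta_le0) (simp add: divide_nonpos_pos)
lemma b_ge: "w \<le> t \<Longrightarrow> b t = 1"
  unfolding b_def using wpos by (subst theta_ge1) auto
lemma a_out: "t \<le> w \<or> 2 * w \<le> t \<Longrightarrow> a1 t = 0 \<and> a2 t = 0 \<and> a3 t = 0"
  unfolding a1_def a2_def a3_def using wpos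
  by (auto simp: th_out divide_nonpos_pos field_simps)
lemma b_out: "t \<le> 0 \<or> w \<le> t \<Longrightarrow> b1 t = 0 \<and> b2 t = 0 \<and> b3 t = 0"
  unfolding b1_def b2_def b3_def using wpos
  by (auto simp: th_out divide_nonpos_pos field_simps)

lemma u_eq: "ufun k k' w = sep2 (trig 1 (real k) 0) (trig 1 0 0) (Rf a (real k)) (trig 1 0 0) (trig 1 (real k') 0) (Rf b (real k'))"
proof (intro ext)
  fix x y t
  show "ufun k k' w x y t = sep2 (trig 1 (real k) 0) (trig 1 0 0) (Rf a (real k)) (trig 1 0 0) (trig 1 (real k') 0) (Rf b (real k')) x y t"
  proof (cases "t \<le> w")
    case True
    then show ?thesis using a_le[OF True]
      by (simp add: ufun_def sep2_def trig_def Rf_def ffun_def gfun_def b_def)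
  next
    case False
    then show ?thesis using b_ge[of t]
      by (simp add: ufun_def sep2_def trig_def Rf_def ffun_def gfun_def a_def)
  qed
qed

lemma K1: "real k / 2 * c1 t * a t * exp (- real k * t) = (b2 t - 2 * real k' * b1 t) * exp (- real k' * t)"
proof (cases "t \<le> w")
  case True
  have "exp (- (real k' - real k) * t) * exp (- real k * t) = exp (- real k' * t)"
    by (simp add: exp_add[symmetric] algebra_simps)
  then show ?thesis using True a_le[OF True] kpos unfolding c1_def
    by (simp add: field_simps)
next
  case False then show ?thesis using b_out[of t] by (simp add: c1_def)
qed

lemma K2: "real k' / 2 * c2 t * b t * exp (- real k' * t) = (a2 t - 2 * real k * a1 t) * exp (- real k * t)"
proof (cases "w \<le> t")
  case True
  have "exp ((real k' - real k) * t) * exp (- real k' * t) = exp (- real k * t)"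
    by (simp add: exp_add[symmetric] algebra_simps)
  then show ?thesis using True b_ge[OF True] kk unfolding c2_def
    by (simp add: field_simps)
next
  case False then show ?thesis using a_out[of t] by (simp add: c2_def)
qed

lemma c1_d: "(c1 has_real_derivative dc1 t) (at t)"
  unfolding c1_def[abs_def] dc1_def
  using kpos by (auto intro!: derivative_eq_intros b1_d b2_d simp: field_simps)

lemma c2_d: "(c2 has_real_derivative dc2 t) (at t)"
  unfolding c2_def[abs_def] dc2_def
  using kk by (auto intro!: derivative_eq_intros a1_d a2_d simp: field_simps)


definition "Am x y t = mat 1
   + (cos (real k * x) * cos (real k' * y) * (c1 t / (2 * real k))) *\<^sub>R U 1 1
   + (sin (real k * x) * sin (real k' * y) * (c2 t / real k)) *\<^sub>R U 1 2
   + (sin (real k * x) * sin (real k' * y) * (c1 t / real k')) *\<^sub>R U 2 1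
   + (cos (real k * x) * cos (real k' * y) * (c2 t / (2 * real k'))) *\<^sub>R U 2 2"

lemma Am_comp:
  "Am x y t $ 1 $ 1 = 1 + cos (real k * x) * cos (real k' * y) * (c1 t / (2 * real k))"
  "Am x y t $ 1 $ 2 = sin (real k * x) * sin (real k' * y) * (c2 t / real k)"
  "Am x y t $ 2 $ 1 = sin (real k * x) * sin (real k' * y) * (c1 t / real k')"
  "Am x y t $ 2 $ 2 = 1 + cos (real k * x) * cos (real k' * y) * (c2 t / (2 * real k'))"
  by (simp_all add: Am_def U_def mat_def)

lemma la_d: "((\<lambda>t. a1 t - real k * a t) has_real_derivative a2 t - real k * a1 t) (at t)"
  by (auto intro!: derivative_eq_intros a_d a1_d)
lemma lb_d: "((\<lambda>t. b1 t - real k' * b t) has_real_derivative b2 t - real k' * b1 t) (at t)"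
  by (auto intro!: derivative_eq_intros b_d b1_d)

abbreviation "u \<equiv> ufun k k' w"

lemma pu0: "pd 0 u = sep2 (trig (1 * real k) (real k) (0 + pi/2)) (trig 1 0 0) (Rf a (real k))
   (trig (1 * 0) 0 (0 + pi/2)) (trig 1 (real k') 0) (Rf b (real k'))"
  by (simp only: u_eq pd0_sep2)
lemma pu1: "pd 1 u = sep2 (trig 1 (real k) 0) (trig (1 * 0) 0 (0 + pi/2)) (Rf a (real k))
   (trig 1 0 0) (trig (1 * real k') (real k') (0 + pi/2)) (Rf b (real k'))"
  by (simp only: u_eq pd1_sep2)
lemma pu2: "pd 2 u = sep2 (trig 1 (real k) 0) (trig 1 0 0) (Rf (\<lambda>t. a1 t - real k * a t) (real k))
   (trig 1 0 0) (trig 1 (real k') 0) (Rf (\<lambda>t. b1 t - real k' * b t) (real k'))"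
  unfolding u_eq by (rule pd2_sep2[OF a_d b_d])
lemma pu22: "pd 2 (pd 2 u) = sep2 (trig 1 (real k) 0) (trig 1 0 0)
     (Rf (\<lambda>t. (a2 t - real k * a1 t) - real k * (a1 t - real k * a t)) (real k))
   (trig 1 0 0) (trig 1 (real k') 0)
     (Rf (\<lambda>t. (b2 t - real k' * b1 t) - real k' * (b1 t - real k' * b t)) (real k'))"
  unfolding pu2 by (rule pd2_sep2[OF la_d lb_d])

lemma ux: "pd 0 u = (\<lambda>x y t. - (real k * sin (real k * x)) * (a t * exp (- real k * t)))"
  unfolding pu0 by (simp add: fun_eq_iff sep2_def trig_def Rf_def cos_add)
lemma uy: "pd 1 u = (\<lambda>x y t. - (real k' * sin (real k' * y)) * (b t * exp (- real k' * t)))"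
  unfolding pu1 by (simp add: fun_eq_iff sep2_def trig_def Rf_def cos_add)
lemma utt: "pd 2 (pd 2 u) x y t = cos (real k * x) * (a2 t - 2 * real k * a1 t + (real k)^2 * a t) * exp (- real k * t)
   + cos (real k' * y) * (b2 t - 2 * real k' * b1 t + (real k')^2 * b t) * exp (- real k' * t)"
  unfolding pu22 by (simp add: sep2_def trig_def Rf_def algebra_simps power2_eq_square)

lemma pde_alg:
  fixes K K' s1 c1x s2 c2y a a1 a2 b b1 b2 C1 C2 E1 E2 :: real
  assumes "s1\<^sup>2 + c1x\<^sup>2 = 1" "s2\<^sup>2 + c2y\<^sup>2 = 1"
    "K / 2 * C1 * a * E1 = (b2 - 2 * K' * b1) * E2" "K' / 2 * C2 * b * E2 = (a2 - 2 * K * a1) * E1"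
  shows "(c1x * (a2 - 2 * K * a1 + K\<^sup>2 * a) * E1 + c2y * (b2 - 2 * K' * b1 + K'\<^sup>2 * b) * E2)
    + (- (K\<^sup>2 * c1x * a * E1) + K / 2 * C1 * a * E1 * c2y * (s1\<^sup>2 - c1x\<^sup>2) - K' * c1x * s2\<^sup>2 * C2 * b * E2)
    + (- (K * s1\<^sup>2 * c2y * C1 * a * E1) + K' / 2 * s2\<^sup>2 * c1x * C2 * b * E2 - K'\<^sup>2 * c2y * b * E2
       - K' / 2 * c1x * c2y\<^sup>2 * C2 * b * E2) = 0"
proof -
  define X where "X = K / 2 * C1 * a * E1"
  define Y where "Y = K' / 2 * C2 * b * E2"
  have "(c1x * (a2 - 2 * K * a1 + K\<^sup>2 * a) * E1 + c2y * (b2 - 2 * K' * b1 + K'\<^sup>2 * b) * E2)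
    + (- (K\<^sup>2 * c1x * a * E1) + K / 2 * C1 * a * E1 * c2y * (s1\<^sup>2 - c1x\<^sup>2) - K' * c1x * s2\<^sup>2 * C2 * b * E2)
    + (- (K * s1\<^sup>2 * c2y * C1 * a * E1) + K' / 2 * s2\<^sup>2 * c1x * C2 * b * E2 - K'\<^sup>2 * c2y * b * E2
       - K' / 2 * c1x * c2y\<^sup>2 * C2 * b * E2)
    = c1x * ((a2 - 2 * K * a1) * E1 - Y) + c2y * ((b2 - 2 * K' * b1) * E2 - X)
      + X * c2y * (1 - (s1\<^sup>2 + c1x\<^sup>2)) + Y * c1x * (1 - (s2\<^sup>2 + c2y\<^sup>2))"
    unfolding X_def Y_def by (simp add: field_simps power2_eq_square)
  also have "\<dots> = 0" using assms unfolding X_def Y_def by simp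
  finally show ?thesis .
qed

lemma pde: "pd 2 (pd 2 u) x y t
    + pd 0 (\<lambda>x y t. Am x y t $ 1 $ 1 * pd 0 u x y t + Am x y t $ 1 $ 2 * pd 1 u x y t) x y t
    + pd 1 (\<lambda>x y t. Am x y t $ 2 $ 1 * pd 0 u x y t + Am x y t $ 2 $ 2 * pd 1 u x y t) x y t = 0"
proof -
  let ?s1 = "sin (real k * x)" and ?c1 = "cos (real k * x)" and ?s2 = "sin (real k' * y)" and ?c2 = "cos (real k' * y)"
  let ?E1 = "exp (- real k * t)" and ?E2 = "exp (- real k' * t)"
  have D1: "pd 0 (\<lambda>x y t. Am x y t $ 1 $ 1 * pd 0 u x y t + Am x y t $ 1 $ 2 * pd 1 u x y t) x y t
     = - ((real k)\<^sup>2 * ?c1 * a t * ?E1) + real k / 2 * c1 t * a t * ?E1 * ?c2 * (?s1\<^sup>2 - ?c1\<^sup>2)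
       - real k' * ?c1 * ?s2\<^sup>2 * c2 t * b t * ?E2"
    unfolding Am_comp ux uy
    using kpos kk by (intro pd0_real) (auto intro!: derivative_eq_intros simp: field_simps power2_eq_square)
  have D2: "pd 1 (\<lambda>x y t. Am x y t $ 2 $ 1 * pd 0 u x y t + Am x y t $ 2 $ 2 * pd 1 u x y t) x y t
     = - (real k * ?s1\<^sup>2 * ?c2 * c1 t * a t * ?E1) + real k' / 2 * ?s2\<^sup>2 * ?c1 * c2 t * b t * ?E2
       - (real k')\<^sup>2 * ?c2 * b t * ?E2 - real k' / 2 * ?c1 * ?c2\<^sup>2 * c2 t * b t * ?E2"
    unfolding Am_comp ux uy
    using kpos kk by (intro pd1_real) (auto intro!: derivative_eq_intros simp: field_simps power2_eq_square)
  show ?thesis unfolding D1 D2 utt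
    by (rule pde_alg[OF _ _ K1 K2]) simp_all
qed


definition "R11 t = c1 t / (2 * real k)"
definition "R12 t = c2 t / real k"
definition "R21 t = c1 t / real k'"
definition "R22 t = c2 t / (2 * real k')"
definition "dR11 t = dc1 t / (2 * real k)"
definition "dR12 t = dc2 t / real k"
definition "dR21 t = dc1 t / real k'"
definition "dR22 t = dc2 t / (2 * real k')"

lemma R_d: "(R11 has_real_derivative dR11 t) (at t)" "(R12 has_real_derivative dR12 t) (at t)"
  "(R21 has_real_derivative dR21 t) (at t)" "(R22 has_real_derivative dR22 t) (at t)"
  unfolding R11_def[abs_def] R12_def[abs_def] R21_def[abs_def] R22_def[abs_def]
    dR11_def dR12_def dR21_def dR22_def
  using kpos kk by (auto intro!: derivative_eq_intros c1_d c2_d)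

lemma b3_cont: "isCont b3 t"
  unfolding b3_def[abs_def] by (intro continuous_intros isCont_o2[OF _ th3_cont]) (use wpos in auto)
lemma a3_cont: "isCont a3 t"
  unfolding a3_def[abs_def] by (intro continuous_intros isCont_o2[OF _ th3_cont]) (use wpos in auto)

lemma dc_cont: "isCont dc1 t" "isCont dc2 t"
  unfolding dc1_def[abs_def] dc2_def[abs_def]
  using kpos kk by (auto intro!: continuous_intros b3_cont a3_cont DERIV_isCont[OF b1_d] DERIV_isCont[OF b2_d]
      DERIV_isCont[OF a1_d] DERIV_isCont[OF a2_d])

lemma R_cont: "isCont R11 t" "isCont R12 t" "isCont R21 t" "isCont R22 t"
   "isCont dR11 t" "isCont dR12 t" "isCont dR21 t" "isCont dR22 t"
  using DERIV_isCont[OF R_d(1)] DERIV_isCont[OF R_d(2)] DERIV_isCont[OF R_d(3)] DERIV_isCont[OF R_d(4)]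
  unfolding dR11_def[abs_def] dR12_def[abs_def] dR21_def[abs_def] dR22_def[abs_def]
  using kpos kk by (auto intro!: continuous_intros dc_cont)

definition "Amf = (\<lambda>p. mat 1 + tripf (cs (real k)) (cs (real k')) R11 (U 1 1) p
    + tripf (sn (real k)) (sn (real k')) R12 (U 1 2) p
    + tripf (sn (real k)) (sn (real k')) R21 (U 2 1) p
    + tripf (cs (real k)) (cs (real k')) R22 (U 2 2) p)"

definition "Ax = (\<lambda>p. tripf (\<lambda>x. - (real k * sn (real k) x)) (cs (real k')) R11 (U 1 1) p
    + tripf (\<lambda>x. real k * cs (real k) x) (sn (real k')) R12 (U 1 2) p
    + tripf (\<lambda>x. real k * cs (real k) x) (sn (real k')) R21 (U 2 1) p
    + tripf (\<lambda>x. - (real k * sn (real k) x)) (cs (real k')) R22 (U 2 2) p)"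
definition "Ay = (\<lambda>p. tripf (cs (real k)) (\<lambda>x. - (real k' * sn (real k') x)) R11 (U 1 1) p
    + tripf (sn (real k)) (\<lambda>x. real k' * cs (real k') x) R12 (U 1 2) p
    + tripf (sn (real k)) (\<lambda>x. real k' * cs (real k') x) R21 (U 2 1) p
    + tripf (cs (real k)) (\<lambda>x. - (real k' * sn (real k') x)) R22 (U 2 2) p)"
definition "At = (\<lambda>p. tripf (cs (real k)) (cs (real k')) dR11 (U 1 1) p
    + tripf (sn (real k)) (sn (real k')) dR12 (U 1 2) p
    + tripf (sn (real k)) (sn (real k')) dR21 (U 2 1) p
    + tripf (cs (real k)) (cs (real k')) dR22 (U 2 2) p)"

lemma Am_Amf: "(\<lambda>(x, y, t). Am x y t) = Amf" "(\<lambda>p. Am (fst p) (fst (snd p)) (snd (snd p))) = Amf"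
  by (auto simp: fun_eq_iff Am_def Amf_def tripf_def cs_def sn_def R11_def R12_def R21_def R22_def)

lemma Amf_deriv: "(Amf has_derivative (\<lambda>h. fst h *\<^sub>R Ax p + fst (snd h) *\<^sub>R Ay p + snd (snd h) *\<^sub>R At p)) (at p)"
proof -
  note t1 = trip_deriv[OF cs_d cs_d R_d(1), where M="U 1 1" and p=p]
  note t2 = trip_deriv[OF sn_d sn_d R_d(2), where M="U 1 2" and p=p]
  note t3 = trip_deriv[OF sn_d sn_d R_d(3), where M="U 2 1" and p=p]
  note t4 = trip_deriv[OF cs_d cs_d R_d(4), where M="U 2 2" and p=p]
  note d = has_derivative_add[OF has_derivative_add[OF has_derivative_add[OF has_derivative_add[OF has_derivative_const t1] t2] t3] t4]
  show ?thesis unfolding Amf_def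
    by (rule has_derivative_eq_rhs[OF d]) (simp add: fun_eq_iff Ax_def Ay_def At_def algebra_simps)
qed

lemma Am_C1: "C1_fun3 Am"
proof (rule C1I[where Fx=Ax and Fy=Ay and Ft=At])
  show "((\<lambda>(x, y, t). Am x y t) has_derivative (\<lambda>h. fst h *\<^sub>R Ax p + fst (snd h) *\<^sub>R Ay p + snd (snd h) *\<^sub>R At p)) (at p)" for p
    unfolding Am_Amf by (rule Amf_deriv)
  show "continuous_on UNIV Ax" unfolding Ax_def
    by (intro continuous_on_add trip_cont cs_cont sn_cont dcs_cont dsn_cont R_cont)
  show "continuous_on UNIV Ay" unfolding Ay_def
    by (intro continuous_on_add trip_cont cs_cont sn_cont dcs_cont dsn_cont R_cont)
  show "continuous_on UNIV At" unfolding At_def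
    by (intro continuous_on_add trip_cont cs_cont sn_cont dcs_cont dsn_cont R_cont)
qed

lemma Am_pd: "pd 0 Am x y t = Ax (x, y, t)" "pd 1 Am x y t = Ay (x, y, t)" "pd 2 Am x y t = At (x, y, t)"
  using pd_frechet[of Am, OF Amf_deriv[of "(x, y, t)", folded Am_Amf(2)]] by auto

lemma Am_periodic: "periodic_xy Am"
proof -
  have p: "cos (real n * (z + 2 * pi)) = cos (real n * z)" "sin (real n * (z + 2 * pi)) = sin (real n * z)" for n z
  proof -
    have e: "real n * (z + 2 * pi) = real n * z + 2 * real n * pi" by (simp add: algebra_simps)
    show "cos (real n * (z + 2 * pi)) = cos (real n * z)" unfolding e cos_add by simp
    show "sin (real n * (z + 2 * pi)) = sin (real n * z)" unfolding e sin_add by simp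
  qed
  show ?thesis unfolding periodic_xy_def Am_def by (simp add: p)
qed

lemma Am_out: "t \<le> 0 \<or> 2 * w \<le> t \<Longrightarrow> Am x y t = mat 1"
proof -
  assume h: "t \<le> 0 \<or> 2 * w \<le> t"
  have "c1 t = 0" using b_out[of t] h wpos unfolding c1_def by auto
  moreover have "c2 t = 0" using a_out[of t] h wpos unfolding c2_def by auto
  ultimately show ?thesis unfolding Am_def by simp
qed


end


context LS begin

lemma kP: "real k' \<le> (1 + C0^2) * real k"
proof -
  have "real k' - real k \<le> C0 * (1 / w)" using dk by simp
  also have "\<dots> \<le> C0 * (C0 * real k)" using wk C0 by (intro mult_left_mono) auto
  finally show ?thesis by (simp add: algebra_simps power2_eq_square)
qed

lemma dkw: "(real k' - real k) * w \<le> C0" using dk wpos by (simp add: field_simps)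

lemma th_abs: "\<bar>th1 s\<bar> \<le> B" "\<bar>th2 s\<bar> \<le> B" "\<bar>th3 s\<bar> \<le> B" "\<bar>theta s\<bar> \<le> B" using Bth by auto

lemma ab_abs:
  "\<bar>a1 t\<bar> \<le> B * (1/w)" "\<bar>a2 t\<bar> \<le> B * (1/w)^2" "\<bar>a3 t\<bar> \<le> B * (1/w)^3"
  "\<bar>b1 t\<bar> \<le> B * (1/w)" "\<bar>b2 t\<bar> \<le> B * (1/w)^2" "\<bar>b3 t\<bar> \<le> B * (1/w)^3"
  using wpos th_abs
  by (auto simp: a1_def a2_def a3_def b1_def b2_def b3_def abs_divide power_divide divide_right_mono)

lemma Kc_ge: "2 * B * 1 * (C0 + 2 * (1 + C0^2)) \<le> Kc C0 B"
  "2 * B * exp (2 * C0) * (C0 + 2 * (1 + C0^2)) \<le> Kc C0 B"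
  "2 * B * 1 * (C0^2 + 2 * (1 + C0^2) * C0 + C0^3 + 2 * C0^2 * (1 + C0^2)) \<le> Kc C0 B"
  "2 * B * exp (2 * C0) * (C0^2 + 2 * (1 + C0^2) * C0 + C0^3 + 2 * C0^2 * (1 + C0^2)) \<le> Kc C0 B"
  "0 \<le> Kc C0 B"
proof -
  define E where "E = exp (2 * C0)"
  define q1 where "q1 = C0 + 2 * (1 + C0^2)"
  define q2 where "q2 = C0^2 + 2 * (1 + C0^2) * C0 + C0^3 + 2 * C0^2 * (1 + C0^2)"
  have K: "Kc C0 B = 2 * B * E * q1 + 2 * B * E * q2"
    unfolding Kc_def E_def q1_def q2_def by (simp only: distrib_left add.assoc)
  have h: "1 \<le> E" "0 \<le> q1" "0 \<le> q2" "0 \<le> 2 * B" unfolding E_def q1_def q2_def using C0 B1 by auto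
  have x: "2 * B * 1 * q1 \<le> 2 * B * E * q1" "2 * B * 1 * q2 \<le> 2 * B * E * q2"
    using h by (intro mult_right_mono mult_left_mono; simp)+
  have y: "0 \<le> 2 * B * E * q1" "0 \<le> 2 * B * E * q2" using h by simp_all
  have "2 * B * 1 * q1 \<le> Kc C0 B" "2 * B * E * q1 \<le> Kc C0 B" "2 * B * 1 * q2 \<le> Kc C0 B"
    "2 * B * E * q2 \<le> Kc C0 B" "0 \<le> Kc C0 B"
    unfolding K using x y by linarith+
  then show "2 * B * 1 * (C0 + 2 * (1 + C0^2)) \<le> Kc C0 B"
    "2 * B * exp (2 * C0) * (C0 + 2 * (1 + C0^2)) \<le> Kc C0 B"
    "2 * B * 1 * (C0^2 + 2 * (1 + C0^2) * C0 + C0^3 + 2 * C0^2 * (1 + C0^2)) \<le> Kc C0 B"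
    "2 * B * exp (2 * C0) * (C0^2 + 2 * (1 + C0^2) * C0 + C0^3 + 2 * C0^2 * (1 + C0^2)) \<le> Kc C0 B"
    "0 \<le> Kc C0 B"
    unfolding E_def q1_def q2_def by (simp only:)+
qed

lemma Kc_nonneg: "0 \<le> Kc C0 B" by (rule Kc_ge(5))

lemma exp1_le: "0 < t \<Longrightarrow> exp (- (real k' - real k) * t) \<le> 1"
proof -
  assume "0 < t"
  then have "- (real k' - real k) * t \<le> 0" using kk by (intro mult_nonpos_nonneg) auto
  then show ?thesis by simp
qed

lemma vpos: "0 < 1 / w" using wpos by simp
lemma kpos': "0 < real k" using kpos by simp
lemma B0: "0 \<le> B" using B1 by simp
lemma P1: "real k \<le> (1 + C0^2) * real k" by (simp add: algebra_simps)
lemma exp2_le: "t < 2 * w \<Longrightarrow> exp ((real k' - real k) * t) \<le> exp (2 * C0)"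
proof -
  assume "t < 2 * w"
  then have "(real k' - real k) * t \<le> (real k' - real k) * (2 * w)" using kk by (intro mult_left_mono) auto
  also have "\<dots> \<le> 2 * C0" using dkw by simp
  finally show ?thesis by simp
qed

lemma c1_bnd: "\<bar>c1 t\<bar> \<le> Kc C0 B * (1 / w)"
proof (cases "t \<le> 0 \<or> w \<le> t")
  case True then show ?thesis using b_out[of t] Kc_nonneg wpos by (simp add: c1_def)
next
  case False
  have "\<bar>c1 t\<bar> \<le> 2 * B * 1 * (C0 + 2 * (1 + C0^2)) * (1 / w)"
    unfolding c1_def
    using False by (intro arith_c[OF vpos kpos' order.refl _ kP ab_abs(4) ab_abs(5) exp_ge_zero exp1_le wk B0]) auto
  also have "\<dots> \<le> Kc C0 B * (1 / w)" using Kc_ge(1) wpos by (intro mult_right_mono) auto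
  finally show ?thesis .
qed

lemma c2_bnd: "\<bar>c2 t\<bar> \<le> Kc C0 B * (1 / w)"
proof (cases "t \<le> w \<or> 2 * w \<le> t")
  case True then show ?thesis using a_out[of t] Kc_nonneg wpos by (simp add: c2_def)
next
  case False
  have "\<bar>c2 t\<bar> \<le> 2 * B * exp (2 * C0) * (C0 + 2 * (1 + C0^2)) * (1 / w)"
    unfolding c2_def
    using False kk by (intro arith_c[OF vpos kpos' _ _ P1 ab_abs(1) ab_abs(2) exp_ge_zero exp2_le wk B0]) auto
  also have "\<dots> \<le> Kc C0 B * (1 / w)" using Kc_ge(2) wpos by (intro mult_right_mono) auto
  finally show ?thesis .
qed

lemma dc1_bnd: "\<bar>dc1 t\<bar> \<le> Kc C0 B * real k * (1 / w)"
proof (cases "t \<le> 0 \<or> w \<le> t")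
  case True then show ?thesis using b_out[of t] Kc_nonneg wpos by (simp add: dc1_def)
next
  case False
  have e: "dc1 t = 2 * ((b3 t - 2 * real k' * b2 t) + (- (real k' - real k)) * (b2 t - 2 * real k' * b1 t))
    * exp (- (real k' - real k) * t) / real k" unfolding dc1_def by (simp add: algebra_simps)
  have d: "\<bar>- (real k' - real k)\<bar> \<le> C0 * (1 / w)" using dk kk by simp
  have "\<bar>dc1 t\<bar> \<le> 2 * B * 1 * (C0^2 + 2 * (1 + C0^2) * C0 + C0^3 + 2 * C0^2 * (1 + C0^2)) * real k * (1 / w)"
    unfolding e
    using False C0 by (intro arith_dc[OF vpos kpos' order.refl _ kP ab_abs(4) ab_abs(5) ab_abs(6) d exp_ge_zero exp1_le wk B0]) auto
  also have "\<dots> \<le> Kc C0 B * real k * (1 / w)" using Kc_ge(3) wpos by (intro mult_right_mono) auto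
  finally show ?thesis .
qed

lemma dc2_bnd: "\<bar>dc2 t\<bar> \<le> Kc C0 B * real k * (1 / w)"
proof (cases "t \<le> w \<or> 2 * w \<le> t")
  case True then show ?thesis using a_out[of t] Kc_nonneg wpos by (simp add: dc2_def)
next
  case False
  have d: "\<bar>real k' - real k\<bar> \<le> C0 * (1 / w)" using dk kk by simp
  have "\<bar>dc2 t\<bar> \<le> 2 * B * exp (2 * C0) * (C0^2 + 2 * (1 + C0^2) * C0 + C0^3 + 2 * C0^2 * (1 + C0^2)) * real k * (1 / w)"
    unfolding dc2_def
    using False kk C0 by (intro arith_dc[OF vpos kpos' _ _ P1 ab_abs(1) ab_abs(2) ab_abs(3) d exp_ge_zero exp2_le wk B0]) auto
  also have "\<dots> \<le> Kc C0 B * real k * (1 / w)" using Kc_ge(4) wpos by (intro mult_right_mono) auto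
  finally show ?thesis .
qed



lemma pu00: "pd 0 (pd 0 u) = sep2 (trig ((1 * real k) * real k) (real k) ((0 + pi/2) + pi/2)) (trig 1 0 0) (Rf a (real k))
   (trig ((1 * 0) * 0) 0 ((0 + pi/2) + pi/2)) (trig 1 (real k') 0) (Rf b (real k'))"
  by (simp only: pu0 pd0_sep2)
lemma pu10: "pd 1 (pd 0 u) = sep2 (trig (1 * real k) (real k) (0 + pi/2)) (trig (1 * 0) 0 (0 + pi/2)) (Rf a (real k))
   (trig (1 * 0) 0 (0 + pi/2)) (trig (1 * real k') (real k') (0 + pi/2)) (Rf b (real k'))"
  by (simp only: pu0 pd1_sep2)
lemma pu20: "pd 2 (pd 0 u) = sep2 (trig (1 * real k) (real k) (0 + pi/2)) (trig 1 0 0) (Rf (\<lambda>t. a1 t - real k * a t) (real k))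
   (trig (1 * 0) 0 (0 + pi/2)) (trig 1 (real k') 0) (Rf (\<lambda>t. b1 t - real k' * b t) (real k'))"
  unfolding pu0 by (rule pd2_sep2[OF a_d b_d])
lemma pu01: "pd 0 (pd 1 u) = sep2 (trig (1 * real k) (real k) (0 + pi/2)) (trig (1 * 0) 0 (0 + pi/2)) (Rf a (real k))
   (trig (1 * 0) 0 (0 + pi/2)) (trig (1 * real k') (real k') (0 + pi/2)) (Rf b (real k'))"
  by (simp only: pu1 pd0_sep2)
lemma pu11: "pd 1 (pd 1 u) = sep2 (trig 1 (real k) 0) (trig ((1 * 0) * 0) 0 ((0 + pi/2) + pi/2)) (Rf a (real k))
   (trig 1 0 0) (trig ((1 * real k') * real k') (real k') ((0 + pi/2) + pi/2)) (Rf b (real k'))"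
  by (simp only: pu1 pd1_sep2)
lemma pu21: "pd 2 (pd 1 u) = sep2 (trig 1 (real k) 0) (trig (1 * 0) 0 (0 + pi/2)) (Rf (\<lambda>t. a1 t - real k * a t) (real k))
   (trig 1 0 0) (trig (1 * real k') (real k') (0 + pi/2)) (Rf (\<lambda>t. b1 t - real k' * b t) (real k'))"
  unfolding pu1 by (rule pd2_sep2[OF a_d b_d])
lemma pu02: "pd 0 (pd 2 u) = sep2 (trig (1 * real k) (real k) (0 + pi/2)) (trig 1 0 0) (Rf (\<lambda>t. a1 t - real k * a t) (real k))
   (trig (1 * 0) 0 (0 + pi/2)) (trig 1 (real k') 0) (Rf (\<lambda>t. b1 t - real k' * b t) (real k'))"
  by (simp only: pu2 pd0_sep2)
lemma pu12: "pd 1 (pd 2 u) = sep2 (trig 1 (real k) 0) (trig (1 * 0) 0 (0 + pi/2)) (Rf (\<lambda>t. a1 t - real k * a t) (real k))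
   (trig 1 0 0) (trig (1 * real k') (real k') (0 + pi/2)) (Rf (\<lambda>t. b1 t - real k' * b t) (real k'))"
  by (simp only: pu2 pd1_sep2)

definition "Bc = 2 * B * C0^2"

lemma Bc_ge: "B \<le> Bc" "1 + B \<le> Bc" "B * C0 \<le> Bc" "B * C0^2 \<le> Bc"
proof -
  have "1 \<le> C0^2" using C0 by (simp add: one_le_power)
  have "B * 1 \<le> B * C0" using C0 B1 by (intro mult_left_mono) auto
  have "B * C0 \<le> B * C0^2" using C0 B1 by (intro mult_left_mono) (auto simp: power2_eq_square)
  have "B * 1 \<le> B * C0^2" using \<open>1 \<le> C0^2\<close> B1 by (intro mult_left_mono) auto
  then show "B \<le> Bc" "1 + B \<le> Bc" "B * C0 \<le> Bc" "B * C0^2 \<le> Bc"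
    unfolding Bc_def using B1 \<open>B * C0 \<le> B * C0^2\<close> by linarith+
qed

lemma kle: "real k \<le> real k'" using kk by simp
lemma k'1: "1 \<le> real k'" using kk by simp

lemma Bc0: "0 \<le> Bc" using Bc_ge(1) B1 by linarith
lemma ga: "\<bar>a t\<bar> \<le> Bc" using th_abs(4)[of "(t - w) / w"] Bc_ge(1) unfolding a_def by linarith
lemma tri3: "\<bar>A - Bv - Cv\<bar> \<le> \<bar>A\<bar> + \<bar>Bv\<bar> + \<bar>Cv\<bar>" for A Bv Cv :: real by arith
lemma gb: "\<bar>b t\<bar> \<le> Bc"
proof -
  have "\<bar>b t\<bar> \<le> 1 + \<bar>theta (t / w)\<bar>" unfolding b_def by linarith
  then show ?thesis using th_abs(4)[of "t/w"] Bc_ge(2) by linarith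
qed
lemma g1: "\<bar>a1 t\<bar> \<le> Bc * real k'" "\<bar>b1 t\<bar> \<le> Bc * real k'"
proof -
  have "B * (1 / w) \<le> B * (C0 * real k)" using wk B1 by (intro mult_left_mono) auto
  also have "\<dots> = (B * C0) * real k" by simp
  also have "\<dots> \<le> Bc * real k'" using Bc_ge(3) kle Bc0 by (intro mult_mono) auto
  finally have c: "B * (1 / w) \<le> Bc * real k'" .
  show "\<bar>a1 t\<bar> \<le> Bc * real k'" "\<bar>b1 t\<bar> \<le> Bc * real k'" using ab_abs(1)[of t] ab_abs(4)[of t] c by linarith+
qed
lemma g2: "\<bar>a2 t\<bar> \<le> Bc * real k'^2" "\<bar>b2 t\<bar> \<le> Bc * real k'^2"
proof -
  have "(1 / w)^2 \<le> (C0 * real k)^2" using wk wpos by (intro power_mono) auto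
  then have "B * (1 / w)^2 \<le> B * (C0 * real k)^2" using B1 by (intro mult_left_mono) auto
  also have "\<dots> = (B * C0^2) * real k^2" by (simp add: power_mult_distrib)
  also have "\<dots> \<le> Bc * real k'^2" using Bc_ge(4) kle Bc0 by (intro mult_mono power_mono) auto
  finally have c: "B * (1 / w)^2 \<le> Bc * real k'^2" .
  show "\<bar>a2 t\<bar> \<le> Bc * real k'^2" "\<bar>b2 t\<bar> \<le> Bc * real k'^2" using ab_abs(2)[of t] ab_abs(5)[of t] c by linarith+
qed


lemma gA1: "\<bar>a1 t - real k * a t\<bar> \<le> 2 * Bc * real k'"
proof -
  have "\<bar>a1 t - real k * a t\<bar> \<le> \<bar>a1 t\<bar> + real k * \<bar>a t\<bar>" by (simp add: abs_mult order.trans[OF abs_triangle_ineq4])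
  also have "\<dots> \<le> Bc * real k' + real k' * Bc" using g1 ga kle Bc0 by (intro add_mono mult_mono) auto
  finally show ?thesis by (simp add: algebra_simps)
qed
lemma gB1: "\<bar>b1 t - real k' * b t\<bar> \<le> 2 * Bc * real k'"
proof -
  have "\<bar>b1 t - real k' * b t\<bar> \<le> \<bar>b1 t\<bar> + real k' * \<bar>b t\<bar>" by (simp add: abs_mult order.trans[OF abs_triangle_ineq4])
  also have "\<dots> \<le> Bc * real k' + real k' * Bc" using g1 gb Bc0 by (intro add_mono mult_mono) auto
  finally show ?thesis by (simp add: algebra_simps)
qed
lemma gA2: "\<bar>a2 t - real k * a1 t - real k * (a1 t - real k * a t)\<bar> \<le> 4 * Bc * real k'^2"
proof -
  have "\<bar>a2 t - real k * a1 t - real k * (a1 t - real k * a t)\<bar> \<le> \<bar>a2 t\<bar> + real k * \<bar>a1 t\<bar> + real k * \<bar>a1 t - real k * a t\<bar>"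
    using tri3[of "a2 t" "real k * a1 t" "real k * (a1 t - real k * a t)"] by (simp add: abs_mult)
  also have "\<dots> \<le> Bc * real k'^2 + real k' * (Bc * real k') + real k' * (2 * Bc * real k')"
    using g1 g2 gA1 kle Bc0 by (intro add_mono mult_mono) auto
  finally show ?thesis by (simp add: power2_eq_square algebra_simps)
qed
lemma gB2: "\<bar>b2 t - real k' * b1 t - real k' * (b1 t - real k' * b t)\<bar> \<le> 4 * Bc * real k'^2"
proof -
  have "\<bar>b2 t - real k' * b1 t - real k' * (b1 t - real k' * b t)\<bar> \<le> \<bar>b2 t\<bar> + real k' * \<bar>b1 t\<bar> + real k' * \<bar>b1 t - real k' * b t\<bar>"
    using tri3[of "b2 t" "real k' * b1 t" "real k' * (b1 t - real k' * b t)"] by (simp add: abs_mult)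
  also have "\<dots> \<le> Bc * real k'^2 + real k' * (Bc * real k') + real k' * (2 * Bc * real k')"
    using g1 g2 gB1 Bc0 by (intro add_mono mult_mono) auto
  finally show ?thesis by (simp add: power2_eq_square algebra_simps)
qed

lemma k0: "0 \<le> real k" by simp

lemma Fb: "\<bar>a t\<bar> + \<bar>b t\<bar> \<le> 8 * Bc * real k' ^ 0"
  "real k * \<bar>a t\<bar> \<le> 8 * Bc * real k' ^ 1"
  "real k' * \<bar>b t\<bar> \<le> 8 * Bc * real k' ^ 1"
  "\<bar>a1 t - real k * a t\<bar> + \<bar>b1 t - real k' * b t\<bar> \<le> 8 * Bc * real k' ^ 1"
  "real k * real k * \<bar>a t\<bar> \<le> 8 * Bc * real k' ^ 2"
  "real k' * real k' * \<bar>b t\<bar> \<le> 8 * Bc * real k' ^ 2"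
  "real k * \<bar>a1 t - real k * a t\<bar> \<le> 8 * Bc * real k' ^ 2"
  "real k' * \<bar>b1 t - real k' * b t\<bar> \<le> 8 * Bc * real k' ^ 2"
  "\<bar>a2 t - real k * a1 t - real k * (a1 t - real k * a t)\<bar> +
     \<bar>b2 t - real k' * b1 t - real k' * (b1 t - real k' * b t)\<bar> \<le> 8 * Bc * real k' ^ 2"
  "0 \<le> 8 * Bc * real k' ^ 2"
proof -
  have k1: "0 \<le> real k'" by simp
  have p1: "0 \<le> Bc * real k'" "0 \<le> Bc * real k' ^ 2" "0 \<le> real k' * (real k' * Bc)" using Bc0 by simp_all
  show "\<bar>a t\<bar> + \<bar>b t\<bar> \<le> 8 * Bc * real k' ^ 0" using ga[of t] gb[of t] Bc0 by simp
  have "real k * \<bar>a t\<bar> \<le> real k' * Bc" using kle ga by (intro mult_mono) auto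
  then show "real k * \<bar>a t\<bar> \<le> 8 * Bc * real k' ^ 1" using p1 by (simp add: algebra_simps)
  have "real k' * \<bar>b t\<bar> \<le> real k' * Bc" using gb by (intro mult_mono) auto
  then show "real k' * \<bar>b t\<bar> \<le> 8 * Bc * real k' ^ 1" using p1 by (simp add: algebra_simps)
  show "\<bar>a1 t - real k * a t\<bar> + \<bar>b1 t - real k' * b t\<bar> \<le> 8 * Bc * real k' ^ 1"
    using gA1[of t] gB1[of t] p1 by simp
  have "real k * real k * \<bar>a t\<bar> \<le> real k' * real k' * Bc" using kle ga by (intro mult_mono) auto
  moreover have "real k' * real k' * Bc \<le> 8 * Bc * real k' ^ 2" using p1 by (simp add: power2_eq_square)
  ultimately show "real k * real k * \<bar>a t\<bar> \<le> 8 * Bc * real k' ^ 2" by linarith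
  have "real k' * real k' * \<bar>b t\<bar> \<le> real k' * real k' * Bc" using gb by (intro mult_mono) auto
  moreover have "real k' * real k' * Bc \<le> 8 * Bc * real k' ^ 2" using p1 by (simp add: power2_eq_square)
  ultimately show "real k' * real k' * \<bar>b t\<bar> \<le> 8 * Bc * real k' ^ 2" by linarith
  have "real k * \<bar>a1 t - real k * a t\<bar> \<le> real k' * (2 * Bc * real k')" using kle gA1 by (intro mult_mono) auto
  moreover have "real k' * (2 * Bc * real k') \<le> 8 * Bc * real k' ^ 2" using p1 by (simp add: power2_eq_square)
  ultimately show "real k * \<bar>a1 t - real k * a t\<bar> \<le> 8 * Bc * real k' ^ 2" by linarith
  have "real k' * \<bar>b1 t - real k' * b t\<bar> \<le> real k' * (2 * Bc * real k')" using gB1 by (intro mult_mono) auto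
  moreover have "real k' * (2 * Bc * real k') \<le> 8 * Bc * real k' ^ 2" using p1 by (simp add: power2_eq_square)
  ultimately show "real k' * \<bar>b1 t - real k' * b t\<bar> \<le> 8 * Bc * real k' ^ 2" by linarith
  show "\<bar>a2 t - real k * a1 t - real k * (a1 t - real k * a t)\<bar> +
     \<bar>b2 t - real k' * b1 t - real k' * (b1 t - real k' * b t)\<bar> \<le> 8 * Bc * real k' ^ 2"
    using gA2[of t] gB2[of t] p1 by simp
  show "0 \<le> 8 * Bc * real k' ^ 2" using p1 by simp
qed

lemma sbl:
  assumes "F = sep2 (trig cc1 a1' p1) (trig dd1 b1' q1) (Rf \<alpha> \<kappa>1) (trig cc2 a2' p2) (trig dd2 b2' q2) (Rf \<beta> \<kappa>2)"
    "0 \<le> t" "0 \<le> \<kappa>1" "0 \<le> \<kappa>2" "\<bar>cc1\<bar> * \<bar>dd1\<bar> * \<bar>\<alpha> t\<bar> + \<bar>cc2\<bar> * \<bar>dd2\<bar> * \<bar>\<beta> t\<bar> \<le> Z"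
  shows "\<bar>F x y t\<bar> \<le> Z"
proof -
  have "\<bar>F x y t\<bar> \<le> \<bar>cc1\<bar> * \<bar>dd1\<bar> * \<bar>\<alpha> t\<bar> + \<bar>cc2\<bar> * \<bar>dd2\<bar> * \<bar>\<beta> t\<bar>"
    unfolding assms(1) by (rule sep2_bound[OF assms(2-4)])
  then show ?thesis using assms(5) by linarith
qed

lemma cbu: "0 \<le> t \<Longrightarrow> \<bar>u x y t\<bar> \<le> 8 * Bc * real k' ^ 0"
  using Fb(1)[of t] by (intro sbl[OF u_eq]) simp_all

lemma cb0: "0 \<le> t \<Longrightarrow> \<bar>pd 0 u x y t\<bar> \<le> 8 * Bc * real k' ^ 1"
  using Fb(2)[of t] by (intro sbl[OF pu0]) simp_all

lemma cb1: "0 \<le> t \<Longrightarrow> \<bar>pd 1 u x y t\<bar> \<le> 8 * Bc * real k' ^ 1"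
  using Fb(3)[of t] by (intro sbl[OF pu1]) simp_all

lemma cb2: "0 \<le> t \<Longrightarrow> \<bar>pd 2 u x y t\<bar> \<le> 8 * Bc * real k' ^ 1"
  using Fb(4)[of t] by (intro sbl[OF pu2]) simp_all

lemma cb00: "0 \<le> t \<Longrightarrow> \<bar>pd 0 (pd 0 u) x y t\<bar> \<le> 8 * Bc * real k' ^ 2"
  using Fb(5)[of t] by (intro sbl[OF pu00]) simp_all

lemma cb01: "0 \<le> t \<Longrightarrow> \<bar>pd 0 (pd 1 u) x y t\<bar> \<le> 8 * Bc * real k' ^ 2"
  using Fb(10) by (intro sbl[OF pu01]) simp_all

lemma cb02: "0 \<le> t \<Longrightarrow> \<bar>pd 0 (pd 2 u) x y t\<bar> \<le> 8 * Bc * real k' ^ 2"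
  using Fb(7)[of t] by (intro sbl[OF pu02]) simp_all

lemma cb10: "0 \<le> t \<Longrightarrow> \<bar>pd 1 (pd 0 u) x y t\<bar> \<le> 8 * Bc * real k' ^ 2"
  using Fb(10) by (intro sbl[OF pu10]) simp_all

lemma cb11: "0 \<le> t \<Longrightarrow> \<bar>pd 1 (pd 1 u) x y t\<bar> \<le> 8 * Bc * real k' ^ 2"
  using Fb(6)[of t] by (intro sbl[OF pu11]) simp_all

lemma cb12: "0 \<le> t \<Longrightarrow> \<bar>pd 1 (pd 2 u) x y t\<bar> \<le> 8 * Bc * real k' ^ 2"
  using Fb(8)[of t] by (intro sbl[OF pu12]) simp_all

lemma cb20: "0 \<le> t \<Longrightarrow> \<bar>pd 2 (pd 0 u) x y t\<bar> \<le> 8 * Bc * real k' ^ 2"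
  using Fb(7)[of t] by (intro sbl[OF pu20]) simp_all

lemma cb21: "0 \<le> t \<Longrightarrow> \<bar>pd 2 (pd 1 u) x y t\<bar> \<le> 8 * Bc * real k' ^ 2"
  using Fb(8)[of t] by (intro sbl[OF pu21]) simp_all

lemma cb22: "0 \<le> t \<Longrightarrow> \<bar>pd 2 (pd 2 u) x y t\<bar> \<le> 8 * Bc * real k' ^ 2"
  using Fb(9)[of t] by (intro sbl[OF pu22]) simp_all

lemma cbg: "i \<in> {0, 1, 2} \<Longrightarrow> j \<in> {0, 1, 2} \<Longrightarrow> 0 \<le> t \<Longrightarrow> \<bar>pd i (pd j u) x y t\<bar> \<le> 8 * Bc * real k' ^ 2"
  using cb00 cb01 cb02 cb10 cb11 cb12 cb20 cb21 cb22 by auto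
lemma cbs: "i \<in> {0, 1, 2} \<Longrightarrow> 0 \<le> t \<Longrightarrow> \<bar>pd i u x y t\<bar> \<le> 8 * Bc * real k' ^ 1"
  using cb0 cb1 cb2 by auto

lemma part_c:
  assumes "length is \<le> 2" "set is \<subseteq> {0, 1, 2}" "0 \<le> t"
  shows "\<bar>pderivs is u x y t\<bar> \<le> 8 * Bc * real k' ^ length is"
proof (cases "is")
  case Nil then show ?thesis unfolding pderivs_def using cbu[OF assms(3)] by simp
next
  case (Cons i r)
  show ?thesis
  proof (cases r)
    case Nil
    have "i \<in> {0, 1, 2}" using assms Cons by auto
    moreover have "pderivs is u = pd i u" "length is = 1" using Cons Nil by (simp_all add: pderivs_def)
    ultimately show ?thesis using cbs[OF _ assms(3)] by metis
  next
    case (Cons j r2)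
    have r2: "r2 = []" using assms \<open>is = i # r\<close> Cons by auto
    have "i \<in> {0, 1, 2}" "j \<in> {0, 1, 2}" using assms \<open>is = i # r\<close> Cons by auto
    moreover have "pderivs is u = pd i (pd j u)" "length is = 2" using \<open>is = i # r\<close> Cons r2 by (simp_all add: pderivs_def)
    ultimately show ?thesis using cbg[OF _ _ assms(3)] by metis
  qed
qed


lemma trip_bnd2:
  assumes "\<bar>P (fst p)\<bar> \<le> p1" "\<bar>Q (fst (snd p))\<bar> \<le> q1" "\<bar>R (snd (snd p))\<bar> \<le> r" "norm M \<le> 1"
  shows "norm (tripf P Q R M p) \<le> p1 * q1 * r"
proof -
  have "norm (tripf P Q R M p) = \<bar>P (fst p)\<bar> * \<bar>Q (fst (snd p))\<bar> * \<bar>R (snd (snd p))\<bar> * norm M"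
    by (rule trip_norm)
  also have "\<dots> \<le> p1 * q1 * r * 1"
    using assms by (intro mult_mono) auto
  finally show ?thesis by simp
qed

abbreviation "KA \<equiv> Kc C0 B"

lemma R_bnd: "\<bar>R11 t\<bar> \<le> KA * (1 / w) / real k" "\<bar>R12 t\<bar> \<le> KA * (1 / w) / real k"
  "\<bar>R21 t\<bar> \<le> KA * (1 / w) / real k" "\<bar>R22 t\<bar> \<le> KA * (1 / w) / real k"
proof -
  have k: "0 < real k" "real k \<le> real k'" "real k \<le> 2 * real k" "real k \<le> 2 * real k'" using kpos kk by auto
  have "\<bar>c1 t\<bar> / (2 * real k) \<le> \<bar>c1 t\<bar> / real k" "\<bar>c1 t\<bar> / real k' \<le> \<bar>c1 t\<bar> / real k"
    "\<bar>c2 t\<bar> / (2 * real k') \<le> \<bar>c2 t\<bar> / real k"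
    using k by (intro divide_left_mono; simp)+
  moreover have "\<bar>c1 t\<bar> / real k \<le> KA * (1 / w) / real k" "\<bar>c2 t\<bar> / real k \<le> KA * (1 / w) / real k"
    using c1_bnd c2_bnd k by (intro divide_right_mono; simp)+
  ultimately show "\<bar>R11 t\<bar> \<le> KA * (1 / w) / real k" "\<bar>R12 t\<bar> \<le> KA * (1 / w) / real k"
    "\<bar>R21 t\<bar> \<le> KA * (1 / w) / real k" "\<bar>R22 t\<bar> \<le> KA * (1 / w) / real k"
    unfolding R11_def R12_def R21_def R22_def by (simp_all add: abs_divide)
qed

lemma dR_bnd: "\<bar>dR11 t\<bar> \<le> KA * (1 / w)" "\<bar>dR12 t\<bar> \<le> KA * (1 / w)"
  "\<bar>dR21 t\<bar> \<le> KA * (1 / w)" "\<bar>dR22 t\<bar> \<le> KA * (1 / w)"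
proof -
  have k: "0 < real k" "real k \<le> real k'" "real k \<le> 2 * real k" "real k \<le> 2 * real k'" using kpos kk by auto
  have "\<bar>dc1 t\<bar> / (2 * real k) \<le> \<bar>dc1 t\<bar> / real k" "\<bar>dc1 t\<bar> / real k' \<le> \<bar>dc1 t\<bar> / real k"
    "\<bar>dc2 t\<bar> / (2 * real k') \<le> \<bar>dc2 t\<bar> / real k"
    using k by (intro divide_left_mono; simp)+
  moreover have "\<bar>dc1 t\<bar> / real k \<le> KA * real k * (1 / w) / real k" "\<bar>dc2 t\<bar> / real k \<le> KA * real k * (1 / w) / real k"
    using dc1_bnd dc2_bnd k by (intro divide_right_mono; simp)+
  moreover have "KA * real k * (1 / w) / real k = KA * (1 / w)" using k by simp
  ultimately show "\<bar>dR11 t\<bar> \<le> KA * (1 / w)" "\<bar>dR12 t\<bar> \<le> KA * (1 / w)"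
    "\<bar>dR21 t\<bar> \<le> KA * (1 / w)" "\<bar>dR22 t\<bar> \<le> KA * (1 / w)"
    unfolding dR11_def dR12_def dR21_def dR22_def by (simp_all add: abs_divide)
qed

lemma Am_minus: "Am x y t - mat 1 = tripf (cs (real k)) (cs (real k')) R11 (U 1 1) (x, y, t)
    + tripf (sn (real k)) (sn (real k')) R12 (U 1 2) (x, y, t)
    + tripf (sn (real k)) (sn (real k')) R21 (U 2 1) (x, y, t)
    + tripf (cs (real k)) (cs (real k')) R22 (U 2 2) (x, y, t)"
  using fun_cong[OF Am_Amf(2), of "(x, y, t)"] unfolding Amf_def by (simp add: algebra_simps)

lemma csb: "\<bar>cs \<kappa> z\<bar> \<le> 1" "\<bar>sn \<kappa> z\<bar> \<le> 1" "0 \<le> \<kappa> \<Longrightarrow> \<bar>- (\<kappa> * sn \<kappa> z)\<bar> \<le> \<kappa>" "0 \<le> \<kappa> \<Longrightarrow> \<bar>\<kappa> * cs \<kappa> z\<bar> \<le> \<kappa>"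
  using cs_abs[of \<kappa> z] sn_abs[of \<kappa> z] by (auto simp: abs_mult intro: mult_left_le)

lemma A_bnd: "norm (Am x y t - mat 1) \<le> 4 * (KA * (1 / w) / real k)"
proof -
  have "norm (Am x y t - mat 1) \<le> 1 * 1 * (KA * (1 / w) / real k) + 1 * 1 * (KA * (1 / w) / real k)
     + 1 * 1 * (KA * (1 / w) / real k) + 1 * 1 * (KA * (1 / w) / real k)"
    unfolding Am_minus
    by (rule order.trans[OF norm4], intro add_mono trip_bnd2 csb R_bnd U_norm)
  then show ?thesis by simp
qed

lemma Ax_bnd: "norm (Ax p) \<le> 4 * (real k * (KA * (1 / w) / real k))"
proof -
  have "norm (Ax p) \<le> real k * 1 * (KA * (1 / w) / real k) + real k * 1 * (KA * (1 / w) / real k)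
     + real k * 1 * (KA * (1 / w) / real k) + real k * 1 * (KA * (1 / w) / real k)"
    unfolding Ax_def
    by (rule order.trans[OF norm4], intro add_mono trip_bnd2 csb R_bnd U_norm) simp_all
  then show ?thesis by simp
qed

lemma Ay_bnd: "norm (Ay p) \<le> 4 * (real k' * (KA * (1 / w) / real k))"
proof -
  have "norm (Ay p) \<le> 1 * real k' * (KA * (1 / w) / real k) + 1 * real k' * (KA * (1 / w) / real k)
     + 1 * real k' * (KA * (1 / w) / real k) + 1 * real k' * (KA * (1 / w) / real k)"
    unfolding Ay_def
    by (rule order.trans[OF norm4], intro add_mono trip_bnd2 csb R_bnd U_norm) simp_all
  then show ?thesis by simp
qed

lemma At_bnd: "norm (At p) \<le> 4 * (KA * (1 / w))"
proof -
  have "norm (At p) \<le> 1 * 1 * (KA * (1 / w)) + 1 * 1 * (KA * (1 / w))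
     + 1 * 1 * (KA * (1 / w)) + 1 * 1 * (KA * (1 / w))"
    unfolding At_def
    by (rule order.trans[OF norm4], intro add_mono trip_bnd2 csb dR_bnd U_norm)
  then show ?thesis by simp
qed


end


context LS begin

lemma u000: "u 0 0 0 = 1"
  using wpos by (simp add: ufun_def ffun_def gfun_def theta_le0)

lemma u_bnd: "0 \<le> t \<Longrightarrow> \<bar>u x y t\<bar> \<le> 8 * Bc"
  using cbu[of t x y] by simp

definition "Sset = {\<bar>u x' y' t'\<bar> | x' y' t'. 0 \<le> t' \<and> t' \<le> 2 * w}"

lemma Sup_ge1: "1 \<le> Sup Sset"
proof -
  have "1 \<in> Sset" unfolding Sset_def using wpos u000 by (auto intro!: exI[of _ 0])
  moreover have "bdd_above Sset" unfolding Sset_def using u_bnd by (auto intro!: bdd_aboveI[of _ "8 * Bc"])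
  ultimately show ?thesis by (rule cSup_upper)
qed

lemma final_all:
  assumes M1: "4 * (1 + C0^2) * KA \<le> M" and M2: "8 * Bc \<le> M"
  shows "(\<exists>A :: real \<Rightarrow> real \<Rightarrow> real \<Rightarrow> real^2^2.
         C1_fun3 A \<and> periodic_xy A \<and>
         (\<forall>x y t. (t \<le> 0 \<or> 2 * w \<le> t) \<longrightarrow> A x y t = mat 1) \<and>
         (\<forall>x y t.
            pd 2 (pd 2 u) x y t
            + pd 0 (\<lambda>x y t. A x y t $ 1 $ 1 * pd 0 u x y t + A x y t $ 1 $ 2 * pd 1 u x y t) x y t
            + pd 1 (\<lambda>x y t. A x y t $ 2 $ 1 * pd 0 u x y t + A x y t $ 2 $ 2 * pd 1 u x y t) x y t
            = 0) \<and>
         (\<forall>x y t. norm (A x y t - mat 1) \<le> M / (w * real k)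
                 \<and> norm (pd 0 A x y t) \<le> M / w
                 \<and> norm (pd 1 A x y t) \<le> M / w
                 \<and> norm (pd 2 A x y t) \<le> M / w)) \<and>
      (\<forall>is x y t. length is \<le> 2 \<and> set is \<subseteq> {0, 1, 2} \<and> 0 \<le> t \<and> t \<le> 2 * w \<longrightarrow>
         \<bar>pderivs is u x y t\<bar> \<le> M * real k' ^ length is *
            Sup {\<bar>u x' y' t'\<bar> | x' y' t'. 0 \<le> t' \<and> t' \<le> 2 * w}) \<and>
      (\<forall>x y t. t \<le> 0 \<longrightarrow> u x y t = ffun k x y t) \<and>
      (\<forall>x y t. 2 * w \<le> t \<longrightarrow> u x y t = gfun k' x y t)"
proof (intro conjI exI[of _ Am] allI impI)
  have KA0: "0 \<le> KA" by (rule Kc_nonneg)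
  have kp: "0 < real k" using kpos by simp
  have C: "0 \<le> C0^2" by simp
  have "4 * KA \<le> 4 * (1 + C0^2) * KA" using KA0 by (simp add: ring_distribs)
  then have MA: "4 * KA \<le> M" using M1 by linarith
  show "C1_fun3 Am" by (rule Am_C1)
  show "periodic_xy Am" by (rule Am_periodic)
  show "Am x y t = mat 1" if "t \<le> 0 \<or> 2 * w \<le> t" for x y t using Am_out that by blast
  show "pd 2 (pd 2 u) x y t
            + pd 0 (\<lambda>x y t. Am x y t $ 1 $ 1 * pd 0 u x y t + Am x y t $ 1 $ 2 * pd 1 u x y t) x y t
            + pd 1 (\<lambda>x y t. Am x y t $ 2 $ 1 * pd 0 u x y t + Am x y t $ 2 $ 2 * pd 1 u x y t) x y t
            = 0" for x y t by (rule pde)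
  fix x y t
  show "norm (Am x y t - mat 1) \<le> M / (w * real k)"
  proof -
    have "4 * (KA * (1 / w) / real k) = (4 * KA) / (w * real k)" by simp
    also have "\<dots> \<le> M / (w * real k)" using MA wpos kp by (intro divide_right_mono) auto
    finally show ?thesis using A_bnd[of x y t] by linarith
  qed
  show "norm (pd 0 Am x y t) \<le> M / w"
  proof -
    have "4 * (real k * (KA * (1 / w) / real k)) = (4 * KA) / w" using kp by simp
    also have "\<dots> \<le> M / w" using MA wpos by (intro divide_right_mono) auto
    finally show ?thesis using Ax_bnd[of "(x, y, t)"] Am_pd(1)[of x y t] by simp
  qed
  show "norm (pd 2 Am x y t) \<le> M / w"
  proof -
    have "4 * (KA * (1 / w)) = (4 * KA) / w" by simp
    also have "\<dots> \<le> M / w" using MA wpos by (intro divide_right_mono) auto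
    finally show ?thesis using At_bnd[of "(x, y, t)"] Am_pd(3)[of x y t] by simp
  qed
  show "norm (pd 1 Am x y t) \<le> M / w"
  proof -
    have "4 * (real k' * (KA * (1 / w) / real k)) = (4 * KA * (real k' / real k)) / w" by (simp add: mult_ac)
    also have "\<dots> \<le> (4 * KA * (1 + C0^2)) / w"
    proof -
      have "real k' / real k \<le> 1 + C0^2" using kP kp by (simp add: divide_le_eq)
      then show ?thesis using KA0 wpos by (intro divide_right_mono mult_left_mono) auto
    qed
    also have "\<dots> \<le> M / w" using M1 wpos by (intro divide_right_mono) (auto simp: algebra_simps)
    finally show ?thesis using Ay_bnd[of "(x, y, t)"] Am_pd(2)[of x y t] by simp
  qed
next
  fix "is" :: "nat list" and x y t :: real
  assume h: "length is \<le> 2 \<and> set is \<subseteq> {0, 1, 2} \<and> 0 \<le> t \<and> t \<le> 2 * w"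
  have "\<bar>pderivs is u x y t\<bar> \<le> 8 * Bc * real k' ^ length is" using part_c h by blast
  also have "\<dots> \<le> M * real k' ^ length is" using M2 by (intro mult_right_mono) auto
  also have "\<dots> \<le> M * real k' ^ length is * Sup Sset"
  proof -
    have "0 \<le> M * real k' ^ length is" using M2 Bc0 by simp
    from mult_left_mono[OF Sup_ge1 this] show ?thesis by simp
  qed
  finally show "\<bar>pderivs is u x y t\<bar> \<le> M * real k' ^ length is *
            Sup {\<bar>u x' y' t'\<bar> | x' y' t'. 0 \<le> t' \<and> t' \<le> 2 * w}" unfolding Sset_def .
next
  fix x y t :: real assume "t \<le> 0"
  then show "u x y t = ffun k x y t" using wpos
    by (simp add: ufun_def theta_le0 divide_nonpos_pos)
next
  fix x y t :: real assume h: "2 * w \<le> t"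
  then have "1 \<le> (t - w) / w" using wpos by (simp add: field_simps)
  then show "u x y t = gfun k' x y t" using wpos h
    by (simp add: ufun_def theta_ge1)
qed

end

theorem lemma2p1:
  fixes C0 :: real
  assumes "C0 \<ge> 1"
  shows "\<exists>M::real. \<forall>(k::nat) (k'::nat) (w::real).
     0 < k \<and> 0 < k' \<and> 0 < w \<and>
     0 < real k' - real k \<and> real k' - real k \<le> C0 / w \<and> 1 / w \<le> C0 * real k \<longrightarrow>
     (let u = ufun k k' w in
      (\<exists>A :: real \<Rightarrow> real \<Rightarrow> real \<Rightarrow> real^2^2.
         C1_fun3 A \<and> periodic_xy A \<and>
         (\<forall>x y t. (t \<le> 0 \<or> 2 * w \<le> t) \<longrightarrow> A x y t = mat 1) \<and>
         (\<forall>x y t.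
            pd 2 (pd 2 u) x y t
            + pd 0 (\<lambda>x y t. A x y t $ 1 $ 1 * pd 0 u x y t + A x y t $ 1 $ 2 * pd 1 u x y t) x y t
            + pd 1 (\<lambda>x y t. A x y t $ 2 $ 1 * pd 0 u x y t + A x y t $ 2 $ 2 * pd 1 u x y t) x y t
            = 0) \<and>
         (\<forall>x y t. norm (A x y t - mat 1) \<le> M / (w * real k)
                 \<and> norm (pd 0 A x y t) \<le> M / w
                 \<and> norm (pd 1 A x y t) \<le> M / w
                 \<and> norm (pd 2 A x y t) \<le> M / w)) \<and>
      (\<forall>is x y t. length is \<le> 2 \<and> set is \<subseteq> {0, 1, 2} \<and> 0 \<le> t \<and> t \<le> 2 * w \<longrightarrow>
         \<bar>pderivs is u x y t\<bar> \<le> M * real k' ^ length is *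
            Sup {\<bar>u x' y' t'\<bar> | x' y' t'. 0 \<le> t' \<and> t' \<le> 2 * w}) \<and>
      (\<forall>x y t. t \<le> 0 \<longrightarrow> u x y t = ffun k x y t) \<and>
      (\<forall>x y t. 2 * w \<le> t \<longrightarrow> u x y t = gfun k' x y t))"
proof -
  obtain B where B: "B \<ge> 1" "\<forall>t. \<bar>theta t\<bar> \<le> B \<and> \<bar>th1 t\<bar> \<le> B \<and> \<bar>th2 t\<bar> \<le> B \<and> \<bar>th3 t\<bar> \<le> B"
    using theta_bounds by blast
  define M where "M = 4 * (1 + C0^2) * Kc C0 B + 8 * (2 * B * C0^2)"
  show ?thesis
  proof (rule exI[of _ M], intro allI impI)
    fix k k' :: nat and w :: real
    assume h: "0 < k \<and> 0 < k' \<and> 0 < w \<and> 0 < real k' - real k \<and> real k' - real k \<le> C0 / w \<and> 1 / w \<le> C0 * real k"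
    interpret L: LS C0 B w k k'
      using assms B h by unfold_locales auto
    have M1: "4 * (1 + C0^2) * Kc C0 B \<le> M" and M2: "8 * L.Bc \<le> M"
    proof -
      have a: "0 \<le> 4 * (1 + C0^2) * Kc C0 B" using L.Kc_nonneg by (intro mult_nonneg_nonneg) auto
      have b: "0 \<le> 8 * (2 * B * C0^2)" using B by simp
      show "4 * (1 + C0^2) * Kc C0 B \<le> M" "8 * L.Bc \<le> M"
        unfolding M_def L.Bc_def using a b by linarith+
    qed
    show "(let u = ufun k k' w in
      (\<exists>A :: real \<Rightarrow> real \<Rightarrow> real \<Rightarrow> real^2^2.
         C1_fun3 A \<and> periodic_xy A \<and>
         (\<forall>x y t. (t \<le> 0 \<or> 2 * w \<le> t) \<longrightarrow> A x y t = mat 1) \<and>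
         (\<forall>x y t.
            pd 2 (pd 2 u) x y t
            + pd 0 (\<lambda>x y t. A x y t $ 1 $ 1 * pd 0 u x y t + A x y t $ 1 $ 2 * pd 1 u x y t) x y t
            + pd 1 (\<lambda>x y t. A x y t $ 2 $ 1 * pd 0 u x y t + A x y t $ 2 $ 2 * pd 1 u x y t) x y t
            = 0) \<and>
         (\<forall>x y t. norm (A x y t - mat 1) \<le> M / (w * real k)
                 \<and> norm (pd 0 A x y t) \<le> M / w
                 \<and> norm (pd 1 A x y t) \<le> M / w
                 \<and> norm (pd 2 A x y t) \<le> M / w)) \<and>
      (\<forall>is x y t. length is \<le> 2 \<and> set is \<subseteq> {0, 1, 2} \<and> 0 \<le> t \<and> t \<le> 2 * w \<longrightarrow>
         \<bar>pderivs is u x y t\<bar> \<le> M * real k' ^ length is *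
            Sup {\<bar>u x' y' t'\<bar> | x' y' t'. 0 \<le> t' \<and> t' \<le> 2 * w}) \<and>
      (\<forall>x y t. t \<le> 0 \<longrightarrow> u x y t = ffun k x y t) \<and>
      (\<forall>x y t. 2 * w \<le> t \<longrightarrow> u x y t = gfun k' x y t))"
      unfolding Let_def by (rule L.final_all[OF M1 M2])
  qed
qed


end
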